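(* There exists an absolute constant $C>0$ such that the following holds. Let $p\geq2$, let $\ell\geq1$ be an integer and let $\theta\in(0,1)$. Let $f:G\to\mathbb{C}$, $L\geq1$, and let $S,T$ be nonempty subsets of $G=\mathbb{Z}/N\mathbb{Z}$ with $|S+T|\leq L|S|$. Then there exists a set $X\subset T$ with $|X|\geq(2L)^{-Cp\ell^2/\theta^2}|T|$ such that $$\|f*\mu_S-f*\mu_S*\lambda_X^{(\ell)}\|_{L^p}\leq\theta\|f\|_{L^p},$$ where $\lambda_X=\mu_X*\mu_{-X}$ and $\lambda_X^{(\ell)}$ denotes the $\ell$-fold convolution $\lambda_X*\dots*\lambda_X$.
   Context: $\|f\|_{L^p}=(\frac1N\sum_{x\in G}|f(x)|^p)^{1/p}$. $\mu_X=(|X|/N)^{-1}1_X$. Convolution: $f*g(x)=\frac1N\sum_yf(y)g(x-y)$. *)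

theory Defs
  imports "HOL-Analysis.Analysis"
begin

text \<open>The group G = Z/NZ is represented by the residues {0..<N} (as integers), with
  addition modulo N. Functions on G are functions int => complex of which only the
  values on {0..<N} are used.\<close>

definition ZN :: "nat \<Rightarrow> int set" where
  "ZN N = {0..<int N}"

definition Lp_norm :: "nat \<Rightarrow> real \<Rightarrow> (int \<Rightarrow> complex) \<Rightarrow> real" where
  "Lp_norm N p f = ((1 / real N) * (\<Sum>x\<in>ZN N. cmod (f x) powr p)) powr (1 / p)"

definition conv :: "nat \<Rightarrow> (int \<Rightarrow> complex) \<Rightarrow> (int \<Rightarrow> complex) \<Rightarrow> int \<Rightarrow> complex" where
  "conv N f g x = (1 / of_nat N) * (\<Sum>y\<in>ZN N. f y * g ((x - y) mod int N))"

definition mu :: "nat \<Rightarrow> int set \<Rightarrow> int \<Rightarrow> complex" where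
  "mu N X x = (if x \<in> X then of_real (real N / real (card X)) else 0)"

definition sumset :: "nat \<Rightarrow> int set \<Rightarrow> int set \<Rightarrow> int set" where
  "sumset N S T = {(s + t) mod int N | s t. s \<in> S \<and> t \<in> T}"

definition negset :: "nat \<Rightarrow> int set \<Rightarrow> int set" where
  "negset N X = {(- x) mod int N | x. x \<in> X}"

definition lam :: "nat \<Rightarrow> int set \<Rightarrow> int \<Rightarrow> complex" where
  "lam N X = conv N (mu N X) (mu N (negset N X))"

text \<open>l-fold convolution power; the 0-th power is the convolution identity N*1_{0}.\<close>
fun conv_pow :: "nat \<Rightarrow> (int \<Rightarrow> complex) \<Rightarrow> nat \<Rightarrow> int \<Rightarrow> complex" where
  "conv_pow N h 0 = (\<lambda>x. if x = 0 then of_nat N else 0)"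
| "conv_pow N h (Suc n) = conv N (conv_pow N h n) h"

end

theory Submission
  imports Defs "HOL-Probability.Hoeffding"
begin

lemma ZN_finite[simp]: "finite (ZN N)" by (simp add: ZN_def)

lemma mod_in_ZN[simp]: "N \<ge> 1 \<Longrightarrow> x mod int N \<in> ZN N"
  by (simp add: ZN_def)

lemma ZN_mod[simp]: "y \<in> ZN N \<Longrightarrow> y mod int N = y"
  by (simp add: ZN_def)

lemma sum_shift:
  assumes "N \<ge> 1"
  shows "(\<Sum>y\<in>ZN N. F ((y + c) mod int N)) = (\<Sum>y\<in>ZN N. (F y :: 'a::comm_monoid_add))"
  by (rule sum.reindex_bij_witness[where i="\<lambda>y. (y - c) mod int N" and j="\<lambda>y. (y + c) mod int N"])
     (use assms in \<open>auto simp: mod_simps\<close>)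

lemma sum_refl:
  assumes "N \<ge> 1"
  shows "(\<Sum>y\<in>ZN N. F ((c - y) mod int N)) = (\<Sum>y\<in>ZN N. (F y :: 'a::comm_monoid_add))"
  by (rule sum.reindex_bij_witness[where i="\<lambda>y. (c - y) mod int N" and j="\<lambda>y. (c - y) mod int N"])
     (use assms in \<open>auto simp: mod_simps\<close>)

lemma conv_comm:
  assumes "N \<ge> 1"
  shows "conv N f g x = conv N g f x"
proof -
  have "(\<Sum>y\<in>ZN N. f y * g ((x - y) mod int N)) = (\<Sum>y\<in>ZN N. f ((x - y) mod int N) * g ((x - (x - y) mod int N) mod int N))"
    using sum_refl[OF assms, of "\<lambda>y. f y * g ((x - y) mod int N)" x] by simp
  also have "\<dots> = (\<Sum>y\<in>ZN N. g y * f ((x - y) mod int N))"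
    by (intro sum.cong) (auto simp: mod_simps)
  finally show ?thesis unfolding conv_def by simp
qed

lemma conv_mod: "conv N f g (x mod int N) = conv N f g x"
  unfolding conv_def by (simp add: mod_simps)

lemma conv_assoc:
  assumes "N \<ge> 1"
  shows "conv N (conv N f g) h x = conv N f (conv N g h) x"
proof -
  have inner: "(\<Sum>y\<in>ZN N. g ((y - z) mod int N) * h ((x - y) mod int N))
      = (\<Sum>w\<in>ZN N. g w * h ((x - z - w) mod int N))" for z
    using sum_shift[OF assms, of "\<lambda>y. g ((y - z) mod int N) * h ((x - y) mod int N)" z]
    by (simp add: mod_simps algebra_simps)
  have "conv N (conv N f g) h x = (1 / of_nat N) * (1 / of_nat N) *
      (\<Sum>y\<in>ZN N. \<Sum>z\<in>ZN N. f z * (g ((y - z) mod int N) * h ((x - y) mod int N)))"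
    unfolding conv_def by (simp add: sum_distrib_left sum_distrib_right algebra_simps)
  also have "\<dots> = (1 / of_nat N) * (1 / of_nat N) *
      (\<Sum>z\<in>ZN N. f z * (\<Sum>y\<in>ZN N. g ((y - z) mod int N) * h ((x - y) mod int N)))"
    by (subst sum.swap) (simp add: sum_distrib_left)
  also have "\<dots> = conv N f (conv N g h) x"
    unfolding conv_def inner by (simp add: sum_distrib_left algebra_simps mod_simps)
  finally show ?thesis .
qed

definition Psum :: "nat \<Rightarrow> real \<Rightarrow> (int \<Rightarrow> complex) \<Rightarrow> real" where
  "Psum N p h = (\<Sum>x\<in>ZN N. cmod (h x) powr p)"

lemma convex_powr0:
  assumes "p \<ge> 1"
  shows "convex_on {0..} (\<lambda>x::real. x powr p)"
proof (rule convex_onI)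
  show "convex {0::real..}" by (rule convex_real_interval)
next
  fix t x y :: real
  assume t: "0 < t" "t < 1" and x: "x \<in> {0..}" and y: "y \<in> {0..}"
  show "((1 - t) *\<^sub>R x + t *\<^sub>R y) powr p \<le> (1 - t) * x powr p + t * y powr p"
  proof (cases "x = 0 \<or> y = 0")
    case True
    have le1: "s powr p \<le> s" if "0 \<le> s" "s \<le> 1" for s :: real
    proof (cases "s = 0")
      case False
      then have "s powr p \<le> s powr 1" using that assms by (intro powr_mono') auto
      then show ?thesis using that by simp
    qed (use assms in simp)
    show ?thesis
    proof (cases "x = 0")
      case True
      have "(t * y) powr p = t powr p * y powr p" using t y by (simp add: powr_mult)
      also have "\<dots> \<le> t * y powr p" using le1[of t] t by (intro mult_right_mono) auto
      finally show ?thesis using True by simp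
    next
      case False
      then have "y = 0" using True by simp
      have "((1-t) * x) powr p = (1-t) powr p * x powr p" using t x by (simp add: powr_mult)
      also have "\<dots> \<le> (1-t) * x powr p" using le1[of "1-t"] t by (intro mult_right_mono) auto
      finally show ?thesis using \<open>y = 0\<close> by simp
    qed
  next
    case False
    then have "x \<in> {0<..}" "y \<in> {0<..}" using x y by auto
    have "t \<le> 1" "0 \<le> t" using t by auto
    from convex_onD[OF powr_convex[OF assms] this(2) this(1) \<open>x \<in> {0<..}\<close> \<open>y \<in> {0<..}\<close>]
    show ?thesis by simp
  qed
qed

lemma jensen_cmod:
  fixes w :: "'i \<Rightarrow> real" and z :: "'i \<Rightarrow> complex"
  assumes p: "p \<ge> 1" and fin: "finite I" and ne: "I \<noteq> {}"
    and w: "\<And>i. i \<in> I \<Longrightarrow> w i \<ge> 0" and ws: "(\<Sum>i\<in>I. w i) = 1"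
  shows "cmod (\<Sum>i\<in>I. of_real (w i) * z i) powr p \<le> (\<Sum>i\<in>I. w i * cmod (z i) powr p)"
proof -
  have "cmod (\<Sum>i\<in>I. of_real (w i) * z i) \<le> (\<Sum>i\<in>I. w i * cmod (z i))"
    by (rule order_trans[OF norm_sum]) (simp add: norm_mult w)
  then have "cmod (\<Sum>i\<in>I. of_real (w i) * z i) powr p \<le> (\<Sum>i\<in>I. w i * cmod (z i)) powr p"
    using p by (intro powr_mono2) auto
  also have "\<dots> \<le> (\<Sum>i\<in>I. w i * cmod (z i) powr p)"
    using convex_on_sum[OF fin ne convex_powr0[OF p], of w "\<lambda>i. cmod (z i)"] w ws by simp
  finally show ?thesis .
qed

lemma powmean_cmod:
  fixes z :: "'i \<Rightarrow> complex"
  assumes p: "p \<ge> 1" and fin: "finite I"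
  shows "cmod (\<Sum>i\<in>I. z i) powr p \<le> real (card I) powr (p - 1) * (\<Sum>i\<in>I. cmod (z i) powr p)"
proof (cases "I = {}")
  case True then show ?thesis using p by simp
next
  case False
  define n where "n = real (card I)"
  have n: "n > 0" using False fin by (simp add: n_def card_gt_0_iff)
  have "cmod (\<Sum>i\<in>I. of_real (1/n) * z i) powr p \<le> (\<Sum>i\<in>I. (1/n) * cmod (z i) powr p)"
    by (rule jensen_cmod[OF p fin False]) (use n in \<open>auto simp: n_def\<close>)
  moreover have "cmod (\<Sum>i\<in>I. of_real (1/n) * z i) = (1/n) * cmod (\<Sum>i\<in>I. z i)"
  proof -
    have "(\<Sum>i\<in>I. of_real (1/n) * z i) = (\<Sum>i\<in>I. z i) / of_real n"
      by (simp add: sum_divide_distrib)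
    then show ?thesis using n by (simp add: norm_divide)
  qed
  ultimately have "((1/n) * cmod (\<Sum>i\<in>I. z i)) powr p \<le> (1/n) * (\<Sum>i\<in>I. cmod (z i) powr p)"
    by (simp add: sum_distrib_left)
  then have "(1/n) powr p * cmod (\<Sum>i\<in>I. z i) powr p \<le> (1/n) * (\<Sum>i\<in>I. cmod (z i) powr p)"
    using n by (simp add: powr_divide)
  then have "n powr p * ((1/n) powr p * cmod (\<Sum>i\<in>I. z i) powr p) \<le> n powr p * ((1/n) * (\<Sum>i\<in>I. cmod (z i) powr p))"
    using n by (intro mult_left_mono) auto
  moreover have "n powr p * (1/n) powr p = 1" using n by (simp add: powr_divide)
  moreover have "n powr p * (1/n) = n powr (p - 1)" using n by (simp add: powr_diff)
  ultimately show ?thesis by (simp add: n_def[symmetric] mult.assoc[symmetric]) (metis times_divide_eq_left)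
qed

lemma two_cmod:
  assumes p: "p \<ge> 1"
  shows "cmod (a + b) powr p \<le> 2 powr (p - 1) * (cmod a powr p + cmod b powr p)"
  using powmean_cmod[OF p, of "{0::nat,1}" "\<lambda>i. if i = 0 then a else b"] by simp

lemma Lp_le:
  assumes "\<theta> > 0" "p > 0" "Psum N p h \<le> \<theta> powr p * Psum N p f"
  shows "Lp_norm N p h \<le> \<theta> * Lp_norm N p f"
proof -
  have P0: "Psum N p h \<ge> 0" unfolding Psum_def by (simp add: sum_nonneg)
  have "Lp_norm N p h = ((1/real N) * Psum N p h) powr (1/p)" by (simp add: Lp_norm_def Psum_def)
  also have "\<dots> \<le> ((1/real N) * (\<theta> powr p * Psum N p f)) powr (1/p)"
    using assms P0 by (intro powr_mono2 mult_left_mono) auto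
  also have "\<dots> = (\<theta> powr p) powr (1/p) * ((1/real N) * Psum N p f) powr (1/p)"
    using assms by (subst powr_mult[symmetric]) (auto simp: Psum_def sum_nonneg algebra_simps)
  also have "\<dots> = \<theta> * Lp_norm N p f" using assms by (simp add: powr_powr Lp_norm_def Psum_def)
  finally show ?thesis .
qed

definition pd :: "nat \<Rightarrow> (int \<Rightarrow> complex) \<Rightarrow> bool" where
  "pd N w \<longleftrightarrow> (\<exists>r. (\<forall>x. r x \<ge> 0) \<and> w = (\<lambda>x. of_real (r x)) \<and> (\<Sum>x\<in>ZN N. r x) = real N)"

lemma ZN_ne: "N \<ge> 1 \<Longrightarrow> ZN N \<noteq> {}"
  by (auto simp: ZN_def intro!: exI[of _ 0])

lemma conv_mu:
  assumes N: "N \<ge> 1" and Y: "Y \<subseteq> ZN N"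
  shows "conv N h (mu N Y) x = (1 / of_nat (card Y)) * (\<Sum>t\<in>Y. h ((x - t) mod int N))"
proof -
  have fY: "finite Y" using finite_subset[OF Y ZN_finite] .
  have "(\<Sum>y\<in>ZN N. h y * mu N Y ((x - y) mod int N))
      = (\<Sum>t\<in>ZN N. h ((x - t) mod int N) * mu N Y ((x - (x - t) mod int N) mod int N))"
    using sum_refl[OF N, of "\<lambda>y. h y * mu N Y ((x - y) mod int N)" x] by simp
  also have "\<dots> = (\<Sum>t\<in>ZN N. h ((x - t) mod int N) * mu N Y t)"
    by (intro sum.cong) (auto simp: mod_simps)
  also have "\<dots> = (\<Sum>t\<in>Y. h ((x - t) mod int N) * of_real (real N / real (card Y)))"
  proof -
    have "(\<Sum>t\<in>ZN N. h ((x - t) mod int N) * mu N Y t) = (\<Sum>t\<in>Y. h ((x - t) mod int N) * mu N Y t)"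
      by (rule sum.mono_neutral_right[OF ZN_finite Y]) (simp add: mu_def)
    also have "\<dots> = (\<Sum>t\<in>Y. h ((x - t) mod int N) * of_real (real N / real (card Y)))"
      by (rule sum.cong) (simp_all add: mu_def)
    finally show ?thesis .
  qed
  also have "\<dots> = (\<Sum>t\<in>Y. h ((x - t) mod int N)) * of_real (real N / real (card Y))"
    by (simp add: sum_distrib_right sum_divide_distrib)
  finally have "(\<Sum>y\<in>ZN N. h y * mu N Y ((x - y) mod int N)) = (\<Sum>t\<in>Y. h ((x - t) mod int N)) * of_real (real N / real (card Y))" .
  then show ?thesis unfolding conv_def using N by simp
qed

lemma pd_mu:
  assumes "Y \<subseteq> ZN N" "Y \<noteq> {}"
  shows "pd N (mu N Y)"
proof -
  have fY: "finite Y" using finite_subset[OF assms(1) ZN_finite] .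
  then have c: "card Y > 0" using assms by (simp add: card_gt_0_iff)
  show ?thesis unfolding pd_def
  proof (intro exI conjI)
    let ?r = "\<lambda>x. if x \<in> Y then real N / real (card Y) else 0"
    show "\<forall>x. ?r x \<ge> 0" by auto
    show "mu N Y = (\<lambda>x. complex_of_real (?r x))" by (auto simp: mu_def)
    have "(\<Sum>x\<in>ZN N. ?r x) = (\<Sum>x\<in>Y. real N / real (card Y))"
      by (simp add: sum.If_cases inf.absorb2[OF assms(1)])
    then show "(\<Sum>x\<in>ZN N. ?r x) = real N" using c by simp
  qed
qed

lemma pd_conv:
  assumes N: "N \<ge> 1" and "pd N w1" "pd N w2"
  shows "pd N (conv N w1 w2)"
proof -
  obtain r1 where r1: "\<forall>x. r1 x \<ge> 0" "w1 = (\<lambda>x. of_real (r1 x))" "(\<Sum>x\<in>ZN N. r1 x) = real N"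
    using assms unfolding pd_def by blast
  obtain r2 where r2: "\<forall>x. r2 x \<ge> 0" "w2 = (\<lambda>x. of_real (r2 x))" "(\<Sum>x\<in>ZN N. r2 x) = real N"
    using assms unfolding pd_def by blast
  let ?r = "\<lambda>x. (1 / real N) * (\<Sum>y\<in>ZN N. r1 y * r2 ((x - y) mod int N))"
  show ?thesis unfolding pd_def
  proof (intro exI conjI)
    show "\<forall>x. ?r x \<ge> 0" using r1(1) r2(1) by (auto intro!: sum_nonneg divide_nonneg_nonneg mult_nonneg_nonneg)
    show "conv N w1 w2 = (\<lambda>x. complex_of_real (?r x))"
      unfolding conv_def r1(2) r2(2) by (rule ext) simp
    have sh: "(\<Sum>x\<in>ZN N. r2 ((x - y) mod int N)) = real N" for y
      using sum_shift[OF N, of r2 "-y"] r2(3) by simp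
    have "(\<Sum>x\<in>ZN N. ?r x) = (1 / real N) * (\<Sum>x\<in>ZN N. \<Sum>y\<in>ZN N. r1 y * r2 ((x - y) mod int N))"
      by (simp add: sum_distrib_left)
    also have "\<dots> = (1 / real N) * (\<Sum>y\<in>ZN N. \<Sum>x\<in>ZN N. r1 y * r2 ((x - y) mod int N))"
      by (subst sum.swap) (rule refl)
    also have "\<dots> = (1 / real N) * (\<Sum>y\<in>ZN N. r1 y * real N)"
      by (simp only: sum_distrib_left[symmetric] sh)
    also have "\<dots> = real N" using r1(3) N by (simp add: sum_distrib_right[symmetric])
    finally show "(\<Sum>x\<in>ZN N. ?r x) = real N" .
  qed
qed

lemma pd_conv_pow:
  assumes N: "N \<ge> 1" and "pd N h"
  shows "pd N (conv_pow N h n)"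
proof (induction n)
  case 0
  show ?case unfolding pd_def
  proof (intro exI conjI)
    let ?r = "\<lambda>x::int. if x = 0 then real N else 0"
    show "\<forall>x. ?r x \<ge> 0" by auto
    show "conv_pow N h 0 = (\<lambda>x. complex_of_real (?r x))" by auto
    have "0 \<in> ZN N" using N by (simp add: ZN_def)
    then show "(\<Sum>x\<in>ZN N. ?r x) = real N" by (simp add: sum.delta)
  qed
next
  case (Suc n)
  then show ?case using pd_conv[OF N _ assms(2)] by simp
qed

lemma Psum_conv_pd:
  assumes N: "N \<ge> 1" and p: "p \<ge> 1" and "pd N w"
  shows "Psum N p (conv N h w) \<le> Psum N p h"
proof -
  obtain r where r: "\<forall>x. r x \<ge> 0" "w = (\<lambda>x. of_real (r x))" "(\<Sum>x\<in>ZN N. r x) = real N"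
    using assms unfolding pd_def by blast
  have sh: "(\<Sum>x\<in>ZN N. r ((x - y) mod int N)) = real N" for y
    using sum_shift[OF N, of r "-y"] r(3) by simp
  have sr: "(\<Sum>y\<in>ZN N. r ((x - y) mod int N)) = real N" for x
    using sum_refl[OF N, of r x] r(3) by simp
  have "cmod (conv N h w x) powr p \<le> (\<Sum>y\<in>ZN N. (r ((x - y) mod int N) / real N) * cmod (h y) powr p)" for x
  proof -
    have "conv N h w x = (\<Sum>y\<in>ZN N. of_real (r ((x - y) mod int N) / real N) * h y)"
      unfolding conv_def r by (simp add: sum_distrib_left algebra_simps)
    also have "cmod \<dots> powr p \<le> (\<Sum>y\<in>ZN N. (r ((x - y) mod int N) / real N) * cmod (h y) powr p)"
      by (rule jensen_cmod[OF p ZN_finite ZN_ne[OF N]])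
         (use r N sr in \<open>auto simp: sum_divide_distrib[symmetric]\<close>)
    finally show ?thesis .
  qed
  then have "Psum N p (conv N h w) \<le> (\<Sum>x\<in>ZN N. \<Sum>y\<in>ZN N. (r ((x - y) mod int N) / real N) * cmod (h y) powr p)"
    unfolding Psum_def by (intro sum_mono) auto
  also have "\<dots> = (\<Sum>y\<in>ZN N. (\<Sum>x\<in>ZN N. r ((x - y) mod int N)) / real N * cmod (h y) powr p)"
    by (subst sum.swap) (simp add: sum_distrib_right sum_divide_distrib)
  also have "\<dots> = Psum N p h" using N by (simp add: sh Psum_def)
  finally show ?thesis .
qed

lemma cosh_bound: "exp (y::real) + exp (-y) \<le> 2 * exp (y\<^sup>2 / 2)"
proof -
  define h where "h = 2 * \<bar>y\<bar>"
  have "-h * (1/2) + ln (1 + (1/2) * (exp h - 1)) \<le> h\<^sup>2 / 8"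
    using Hoeffdings_lemma_aux[of h "1/2"] by (simp add: h_def)
  then have "ln ((1 + exp h) / 2) \<le> y\<^sup>2 / 2 + \<bar>y\<bar>"
    by (simp add: h_def power2_eq_square algebra_simps add_divide_distrib)
  then have "(1 + exp h) / 2 \<le> exp (y\<^sup>2 / 2 + \<bar>y\<bar>)"
  proof -
    have "(1 + exp h) / 2 > 0" by (simp add: add_pos_pos)
    then show ?thesis using \<open>ln ((1 + exp h) / 2) \<le> y\<^sup>2 / 2 + \<bar>y\<bar>\<close>
      by (metis exp_le_cancel_iff exp_ln)
  qed
  then have "(1 + exp h) / 2 * exp (-\<bar>y\<bar>) \<le> exp (y\<^sup>2 / 2 + \<bar>y\<bar>) * exp (-\<bar>y\<bar>)"
    by (intro mult_right_mono) auto
  then have "(exp (-\<bar>y\<bar>) + exp \<bar>y\<bar>) / 2 \<le> exp (y\<^sup>2 / 2)"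
    by (simp add: h_def algebra_simps flip: exp_add)
  then show ?thesis by (cases "y \<ge> 0") auto
qed

definition Epss :: "nat \<Rightarrow> (nat \<Rightarrow> real) set" where
  "Epss k = PiE {..<k} (\<lambda>_. {-1, 1})"

lemma Eps_finite[simp]: "finite (Epss k)" by (simp add: Epss_def finite_PiE)
lemma Eps_card: "card (Epss k) = 2 ^ k" unfolding Epss_def by (simp add: card_PiE numeral_2_eq_2)
lemma Eps_ne: "Epss k \<noteq> {}" by (simp add: Epss_def PiE_eq_empty_iff)

lemma mgf_bound:
  "(\<Sum>e\<in>Epss k. exp (l * (\<Sum>i<k. e i * x i))) \<le> 2 ^ k * exp (l\<^sup>2 * (\<Sum>i<k. (x i)\<^sup>2) / 2)"
proof -
  have "(\<Sum>e\<in>Epss k. exp (l * (\<Sum>i<k. e i * x i))) = (\<Sum>e\<in>Epss k. \<Prod>i<k. exp (l * e i * x i))"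
    by (simp add: sum_distrib_left exp_sum mult.assoc)
  also have "\<dots> = (\<Prod>i<k. \<Sum>ei\<in>{-1::real, 1}. exp (l * ei * x i))"
    unfolding Epss_def by (subst prod_sum_PiE) auto
  also have "\<dots> = (\<Prod>i<k. exp (l * x i) + exp (-(l * x i)))"
    by (simp add: add.commute)
  also have "\<dots> \<le> (\<Prod>i<k. 2 * exp ((l * x i)\<^sup>2 / 2))"
    by (intro prod_mono) (auto simp: cosh_bound add_nonneg_nonneg)
  also have "\<dots> = 2 ^ k * exp (l\<^sup>2 * (\<Sum>i<k. (x i)\<^sup>2) / 2)"
    by (simp add: prod.distrib exp_sum[symmetric] sum_divide_distrib sum_distrib_left power_mult_distrib)
  finally show ?thesis .
qed

lemma pow_exp_bound:
  assumes p: "p > 0"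
  shows "\<bar>t::real\<bar> powr p \<le> p powr p * exp (-p) * (exp t + exp (-t))"
proof (cases "t = 0")
  case True then show ?thesis using p by (simp add: add_pos_pos)
next
  case False
  then have t: "\<bar>t\<bar> > 0" by simp
  have "ln (\<bar>t\<bar> / p) \<le> \<bar>t\<bar> / p - 1" using t p by (intro ln_le_minus_one) auto
  then have "p * (ln \<bar>t\<bar> - ln p) \<le> \<bar>t\<bar> - p"
    using t p by (simp add: ln_div field_simps)
  then have "exp (p * ln \<bar>t\<bar>) \<le> exp (p * ln p + \<bar>t\<bar> - p)"
    by (simp add: algebra_simps)
  also have "\<dots> = p powr p * exp (-p) * exp \<bar>t\<bar>"
    using p by (simp add: powr_def exp_add exp_diff exp_minus field_simps)
  also have "\<dots> \<le> p powr p * exp (-p) * (exp t + exp (-t))"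
    by (intro mult_left_mono) (auto simp: abs_if)
  finally show ?thesis using t by (simp add: powr_def)
qed

lemma khintchine_real:
  assumes p: "p > 0"
  shows "(\<Sum>e\<in>Epss k. \<bar>\<Sum>i<k. e i * x i\<bar> powr p) \<le> 2 * 2 ^ k * (p * (\<Sum>i<k. (x i)\<^sup>2)) powr (p / 2)"
proof (cases "(\<Sum>i<k. (x i)\<^sup>2) = 0")
  case True
  then have "\<forall>i<k. x i = 0" by (simp add: sum_nonneg_eq_0_iff)
  then show ?thesis by simp
next
  case False
  define s2 where "s2 = (\<Sum>i<k. (x i)\<^sup>2)"
  have s2: "s2 > 0" using False by (simp add: s2_def sum_nonneg order_le_neq_trans)
  define l where "l = sqrt p / sqrt s2"
  have l: "l > 0" using p s2 by (simp add: l_def)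
  have l2: "l\<^sup>2 * s2 / 2 = p / 2" using p s2 by (simp add: l_def power_divide)
  define K where "K = p powr p * exp (-p)"
  have K: "K \<ge> 0" by (simp add: K_def)
  have pt: "\<bar>s\<bar> powr p \<le> l powr (-p) * (K * (exp (l * s) + exp ((-l) * s)))" for s
  proof -
    have "\<bar>s\<bar> powr p = l powr (-p) * \<bar>l * s\<bar> powr p"
      using l by (simp add: abs_mult powr_mult powr_minus field_simps)
    also have "\<dots> \<le> l powr (-p) * (K * (exp (l * s) + exp ((-l) * s)))"
      using pow_exp_bound[OF p, of "l * s"] by (intro mult_left_mono) (auto simp: K_def)
    finally show ?thesis .
  qed
  have "(\<Sum>e\<in>Epss k. \<bar>\<Sum>i<k. e i * x i\<bar> powr p)
      \<le> (\<Sum>e\<in>Epss k. l powr (-p) * (K * (exp (l * (\<Sum>i<k. e i * x i)) + exp ((-l) * (\<Sum>i<k. e i * x i)))))"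
    by (intro sum_mono pt)
  also have "\<dots> = l powr (-p) * K * ((\<Sum>e\<in>Epss k. exp (l * (\<Sum>i<k. e i * x i))) + (\<Sum>e\<in>Epss k. exp ((-l) * (\<Sum>i<k. e i * x i))))"
    by (simp add: sum_distrib_left sum.distrib algebra_simps)
  also have "\<dots> \<le> l powr (-p) * K * (2 ^ k * exp (l\<^sup>2 * s2 / 2) + 2 ^ k * exp ((-l)\<^sup>2 * s2 / 2))"
    using K unfolding s2_def by (intro mult_left_mono add_mono mgf_bound) auto
  also have "\<dots> = 2 * 2 ^ k * (l powr (-p) * p powr p * exp (-p / 2))"
    using l2 by (simp add: K_def algebra_simps exp_minus field_simps flip: exp_add)
  also have "l powr (-p) * p powr p = (p * s2) powr (p / 2)"
  proof -
    have "l powr (-p) * p powr p = (p / l) powr p" using l p by (simp add: powr_minus powr_divide field_simps)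
    also have "p / l = (p * s2) powr (1/2)"
      using p s2 by (simp add: l_def powr_half_sqrt real_sqrt_mult field_simps)
    also have "((p * s2) powr (1/2)) powr p = (p * s2) powr (p / 2)" by (simp add: powr_powr)
    finally show ?thesis .
  qed
  also have "2 * 2 ^ k * ((p * s2) powr (p / 2) * exp (-p / 2)) \<le> 2 * 2 ^ k * (p * s2) powr (p / 2)"
    using p by (intro mult_left_mono mult_right_le_one_le) auto
  finally show ?thesis by (simp add: s2_def)
qed

lemma sq_powr: "(a::real) \<ge> 0 \<Longrightarrow> (a\<^sup>2) powr q = a powr (2 * q)"
proof (cases "a = 0")
  case False
  assume "a \<ge> 0"
  then have "a > 0" using False by simp
  then have "a\<^sup>2 = a powr 2" using powr_realpow[of a 2] by simp
  then have "(a\<^sup>2) powr q = (a powr 2) powr q" by (simp only:)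
  also have "\<dots> = a powr (2 * q)" by (simp add: powr_powr)
  finally show ?thesis .
qed simp

lemma two_real:
  assumes "(p::real) \<ge> 1" "(a::real) \<ge> 0" "b \<ge> 0"
  shows "(a + b) powr p \<le> 2 powr (p - 1) * (a powr p + b powr p)"
proof -
  have "cmod (complex_of_real a + complex_of_real b) = a + b"
    using assms by (metis of_real_add norm_of_real abs_of_nonneg add_nonneg_nonneg)
  then show ?thesis using two_cmod[OF assms(1), of "of_real a" "of_real b"] assms by simp
qed

lemma khintchine_cplx:
  assumes p: "p \<ge> 2"
  shows "(\<Sum>e\<in>Epss k. cmod (\<Sum>i<k. of_real (e i) * c i) powr p)
    \<le> 2 ^ k * (2 powr (p + 1) * p powr (p / 2) * real k powr (p / 2 - 1)) * (\<Sum>i<k. cmod (c i) powr p)"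
proof -
  define Q where "Q = (\<Sum>i<k. (cmod (c i))\<^sup>2)"
  have Q0: "Q \<ge> 0" by (simp add: Q_def sum_nonneg)
  have Re_le: "(\<Sum>i<k. (Re (c i))\<^sup>2) \<le> Q" unfolding Q_def
    by (intro sum_mono) (metis abs_Re_le_cmod abs_ge_zero power2_abs power_mono)
  have Im_le: "(\<Sum>i<k. (Im (c i))\<^sup>2) \<le> Q" unfolding Q_def
    by (intro sum_mono) (metis abs_Im_le_cmod abs_ge_zero power2_abs power_mono)
  have pt: "cmod (\<Sum>i<k. of_real (e i) * c i) powr p \<le>
      2 powr (p - 1) * (\<bar>\<Sum>i<k. e i * Re (c i)\<bar> powr p + \<bar>\<Sum>i<k. e i * Im (c i)\<bar> powr p)" for e
  proof -
    let ?z = "\<Sum>i<k. of_real (e i) * c i"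
    have "Re ?z = (\<Sum>i<k. e i * Re (c i))" "Im ?z = (\<Sum>i<k. e i * Im (c i))"
      by (simp_all add: Re_sum Im_sum)
    moreover have "cmod ?z powr p \<le> (\<bar>Re ?z\<bar> + \<bar>Im ?z\<bar>) powr p"
      using p by (intro powr_mono2 cmod_le) auto
    moreover have "(\<bar>Re ?z\<bar> + \<bar>Im ?z\<bar>) powr p \<le> 2 powr (p - 1) * (\<bar>Re ?z\<bar> powr p + \<bar>Im ?z\<bar> powr p)"
      using p by (intro two_real) auto
    ultimately show ?thesis by simp
  qed
  have "(\<Sum>e\<in>Epss k. cmod (\<Sum>i<k. of_real (e i) * c i) powr p)
      \<le> (\<Sum>e\<in>Epss k. 2 powr (p - 1) * (\<bar>\<Sum>i<k. e i * Re (c i)\<bar> powr p + \<bar>\<Sum>i<k. e i * Im (c i)\<bar> powr p))"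
    by (intro sum_mono pt)
  also have "\<dots> = 2 powr (p - 1) * ((\<Sum>e\<in>Epss k. \<bar>\<Sum>i<k. e i * Re (c i)\<bar> powr p) + (\<Sum>e\<in>Epss k. \<bar>\<Sum>i<k. e i * Im (c i)\<bar> powr p))"
    by (simp only: sum.distrib distrib_left sum_distrib_left)
  also have "\<dots> \<le> 2 powr (p - 1) * (2 * 2 ^ k * (p * Q) powr (p / 2) + 2 * 2 ^ k * (p * Q) powr (p / 2))"
  proof -
    have hR: "(p * (\<Sum>i<k. (Re (c i))\<^sup>2)) powr (p / 2) \<le> (p * Q) powr (p / 2)"
      using p Re_le by (intro powr_mono2 mult_left_mono) (auto simp: sum_nonneg)
    have hI: "(p * (\<Sum>i<k. (Im (c i))\<^sup>2)) powr (p / 2) \<le> (p * Q) powr (p / 2)"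
      using p Im_le by (intro powr_mono2 mult_left_mono) (auto simp: sum_nonneg)
    have p0: "p > 0" using p by simp
    have "(\<Sum>e\<in>Epss k. \<bar>\<Sum>i<k. e i * Re (c i)\<bar> powr p) \<le> 2 * 2 ^ k * (p * (\<Sum>i<k. (Re (c i))\<^sup>2)) powr (p / 2)"
      by (rule khintchine_real[OF p0])
    also have "\<dots> \<le> 2 * 2 ^ k * (p * Q) powr (p / 2)"
      by (rule mult_left_mono[OF hR]) simp
    finally have R: "(\<Sum>e\<in>Epss k. \<bar>\<Sum>i<k. e i * Re (c i)\<bar> powr p) \<le> 2 * 2 ^ k * (p * Q) powr (p / 2)" .
    have "(\<Sum>e\<in>Epss k. \<bar>\<Sum>i<k. e i * Im (c i)\<bar> powr p) \<le> 2 * 2 ^ k * (p * (\<Sum>i<k. (Im (c i))\<^sup>2)) powr (p / 2)"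
      by (rule khintchine_real[OF p0])
    also have "\<dots> \<le> 2 * 2 ^ k * (p * Q) powr (p / 2)"
      by (rule mult_left_mono[OF hI]) simp
    finally have I: "(\<Sum>e\<in>Epss k. \<bar>\<Sum>i<k. e i * Im (c i)\<bar> powr p) \<le> 2 * 2 ^ k * (p * Q) powr (p / 2)" .
    from R I show ?thesis by (intro mult_left_mono add_mono) auto
  qed
  also have "\<dots> = (2 powr (p - 1) * 4) * 2 ^ k * (p * Q) powr (p / 2)"
    by (simp only: mult_ac distrib_left distrib_right)
  also have "2 powr (p - 1) * 4 = 2 powr (p + 1)"
  proof -
    have e: "(2::real) powr 2 = 4" by (simp add: powr_numeral)
    have "p + 1 = (p - 1) + 2" by linarith
    then have "2 powr (p + 1) = 2 powr ((p - 1) + 2)" by (rule arg_cong)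
    also have "\<dots> = 2 powr (p - 1) * 2 powr 2" by (rule powr_add)
    finally have "2 powr (p + 1) = 2 powr (p - 1) * 2 powr 2" .
    then show ?thesis unfolding e by (rule sym)
  qed
  also have "(p * Q) powr (p / 2) = p powr (p / 2) * Q powr (p / 2)"
    using p Q0 by (simp add: powr_mult)
  finally have A: "(\<Sum>e\<in>Epss k. cmod (\<Sum>i<k. of_real (e i) * c i) powr p)
      \<le> 2 ^ k * 2 powr (p + 1) * (p powr (p / 2) * Q powr (p / 2))" by (simp only: mult_ac)
  have Qb: "Q powr (p / 2) \<le> real k powr (p / 2 - 1) * (\<Sum>i<k. cmod (c i) powr p)"
  proof -
    have "Q = cmod (\<Sum>i<k. complex_of_real ((cmod (c i))\<^sup>2))"
    proof -
      have "complex_of_real Q = (\<Sum>i<k. complex_of_real ((cmod (c i))\<^sup>2))" by (simp add: Q_def)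
      then show ?thesis using Q0 by (metis norm_of_real abs_of_nonneg)
    qed
    then have "Q powr (p / 2) \<le> real (card {..<k}) powr (p / 2 - 1) * (\<Sum>i<k. cmod (complex_of_real ((cmod (c i))\<^sup>2)) powr (p / 2))"
      using powmean_cmod[of "p / 2" "{..<k}" "\<lambda>i. complex_of_real ((cmod (c i))\<^sup>2)"] p by simp
    also have "(\<Sum>i<k. cmod (complex_of_real ((cmod (c i))\<^sup>2)) powr (p / 2)) = (\<Sum>i<k. cmod (c i) powr p)"
      by (intro sum.cong refl) (simp add: sq_powr norm_power)
    finally show ?thesis by simp
  qed
  have "2 ^ k * 2 powr (p + 1) * (p powr (p / 2) * Q powr (p / 2))
     \<le> 2 ^ k * 2 powr (p + 1) * (p powr (p / 2) * (real k powr (p / 2 - 1) * (\<Sum>i<k. cmod (c i) powr p)))"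
    by (intro mult_left_mono Qb) auto
  from order_trans[OF A this] show ?thesis by (simp only: mult_ac)
qed

definition Tup :: "nat \<Rightarrow> int set \<Rightarrow> (nat \<Rightarrow> int) set" where
  "Tup k S = PiE {..<k} (\<lambda>_. S)"

lemma Tup_finite[simp]: "finite S \<Longrightarrow> finite (Tup k S)" by (simp add: Tup_def finite_PiE)
lemma Tup_card: "finite S \<Longrightarrow> card (Tup k S) = card S ^ k" by (simp add: Tup_def card_PiE)
lemma Tup_ne: "S \<noteq> {} \<Longrightarrow> Tup k S \<noteq> {}" by (simp add: Tup_def PiE_eq_empty_iff)

lemma tup_coord:
  fixes G :: "int \<Rightarrow> 'b::comm_ring_1"
  assumes S: "finite S" and i: "i < k"
  shows "(\<Sum>a\<in>Tup k S. G (a i)) = of_nat (card S) ^ (k - 1) * (\<Sum>s\<in>S. G s)"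
proof -
  let ?H = "\<lambda>j s. if j = i then G s else 1"
  have "(\<Sum>a\<in>Tup k S. G (a i)) = (\<Sum>a\<in>Tup k S. \<Prod>j<k. ?H j (a j))"
    using i by (intro sum.cong refl) (simp add: prod.delta)
  also have "\<dots> = (\<Prod>j<k. \<Sum>s\<in>S. ?H j s)"
    unfolding Tup_def by (subst prod_sum_PiE) (use S in auto)
  also have "\<dots> = (\<Sum>s\<in>S. G s) * (\<Prod>j\<in>{..<k} - {i}. \<Sum>s\<in>S. ?H j s)"
    using i by (subst prod.remove[of _ i]) auto
  also have "(\<Prod>j\<in>{..<k} - {i}. \<Sum>s\<in>S. ?H j s) = (\<Prod>j\<in>{..<k} - {i}. of_nat (card S))"
    by (intro prod.cong refl) auto
  also have "\<dots> = of_nat (card S) ^ (k - 1)" using i by simp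
  finally show ?thesis by (simp add: mult.commute)
qed

definition swp :: "(nat \<Rightarrow> real) \<Rightarrow> (nat \<Rightarrow> int) \<times> (nat \<Rightarrow> int) \<Rightarrow> (nat \<Rightarrow> int) \<times> (nat \<Rightarrow> int)" where
  "swp e z = ((\<lambda>i. if e i = -1 then snd z i else fst z i), (\<lambda>i. if e i = -1 then fst z i else snd z i))"

lemma swp_in: "z \<in> Tup k S \<times> Tup k S \<Longrightarrow> swp e z \<in> Tup k S \<times> Tup k S"
  by (cases z) (auto simp: swp_def Tup_def PiE_def Pi_def extensional_def)

lemma swp_swp: "swp e (swp e z) = z"
  by (cases z) (auto simp: swp_def)

lemma symmetrize:
  fixes F :: "int \<Rightarrow> complex" and \<Phi> :: "complex \<Rightarrow> real"
  assumes e: "e \<in> Epss k"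
  shows "(\<Sum>z\<in>Tup k S \<times> Tup k S. \<Phi> (\<Sum>i<k. F (fst z i) - F (snd z i)))
       = (\<Sum>z\<in>Tup k S \<times> Tup k S. \<Phi> (\<Sum>i<k. of_real (e i) * (F (fst z i) - F (snd z i))))"
proof -
  have first: "(\<Sum>z\<in>Tup k S \<times> Tup k S. \<Phi> (\<Sum>i<k. F (fst z i) - F (snd z i)))
      = (\<Sum>z\<in>Tup k S \<times> Tup k S. \<Phi> (\<Sum>i<k. F (fst (swp e z) i) - F (snd (swp e z) i)))"
    by (rule sum.reindex_bij_witness[where i="swp e" and j="swp e"]) (auto simp: swp_swp swp_in)
  have inner: "(\<Sum>i<k. F (fst (swp e z) i) - F (snd (swp e z) i)) = (\<Sum>i<k. of_real (e i) * (F (fst z i) - F (snd z i)))" for z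
  proof (intro sum.cong refl)
    fix i assume "i \<in> {..<k}"
    then have "e i = -1 \<or> e i = 1" using e by (auto simp: Epss_def PiE_def Pi_def)
    then show "F (fst (swp e z) i) - F (snd (swp e z) i) = of_real (e i) * (F (fst z i) - F (snd z i))"
      by (auto simp: swp_def)
  qed
  have second: "(\<Sum>z\<in>Tup k S \<times> Tup k S. \<Phi> (\<Sum>i<k. F (fst (swp e z) i) - F (snd (swp e z) i)))
     = (\<Sum>z\<in>Tup k S \<times> Tup k S. \<Phi> (\<Sum>i<k. of_real (e i) * (F (fst z i) - F (snd z i))))"
    by (simp only: inner)
  show ?thesis using first second by simp
qed

lemma two_cmod_diff:
  assumes p: "p \<ge> 1"
  shows "cmod (a - b) powr p \<le> 2 powr (p - 1) * (cmod a powr p + cmod b powr p)"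
  using two_cmod[OF p, of a "- b"] by simp

lemma sample_moment:
  fixes F :: "int \<Rightarrow> complex"
  assumes S: "finite S" "S \<noteq> {}" and k: "k \<ge> 1" and p: "p \<ge> 2"
  shows "(\<Sum>a\<in>Tup k S. cmod ((1 / of_nat k) * (\<Sum>i<k. F (a i)) - (1 / of_nat (card S)) * (\<Sum>s\<in>S. F s)) powr p)
    \<le> real (card S) ^ k * (2 powr (2 * p + 1) * p powr (p / 2) * real k powr (- p / 2)) *
       ((1 / real (card S)) * (\<Sum>s\<in>S. cmod (F s) powr p))"
proof -
  define n where "n = card S"
  have n: "n > 0" using S by (simp add: n_def card_gt_0_iff)
  define T where "T = Tup k S"
  have fT: "finite T" and neT: "T \<noteq> {}" using S by (auto simp: T_def Tup_ne)
  define NT where "NT = real n ^ k"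
  have cT: "real (card T) = NT" using S by (simp add: T_def Tup_card NT_def n_def)
  have NT: "NT > 0" using n by (simp add: NT_def)
  have cTc: "(of_nat (card T) :: complex) = of_real NT" using cT by (metis of_real_of_nat_eq)
  define A where "A a = (\<Sum>i<k. F (a i))" for a
  define m where "m = (1 / of_nat n) * (\<Sum>s\<in>S. F s)"
  define PF where "PF = (\<Sum>s\<in>S. cmod (F s) powr p)"
  define K' where "K' = 2 powr (p + 1) * p powr (p / 2) * real k powr (p / 2 - 1)"
  have p1: "p \<ge> 1" using p by simp
  have sumA: "(\<Sum>a\<in>T. A a) = of_nat k * of_nat n ^ (k - 1) * (\<Sum>s\<in>S. F s)"
  proof -
    have "(\<Sum>a\<in>T. A a) = (\<Sum>i<k. \<Sum>a\<in>T. F (a i))" unfolding A_def by (rule sum.swap)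
    also have "\<dots> = (\<Sum>i<k. of_nat n ^ (k - 1) * (\<Sum>s\<in>S. F s))"
      unfolding T_def n_def by (intro sum.cong refl tup_coord[OF S(1)]) auto
    finally show ?thesis by simp
  qed
  have mA: "m = (\<Sum>a'\<in>T. of_real (1 / NT) * ((1 / of_nat k) * A a'))"
  proof -
    have "(\<Sum>a'\<in>T. of_real (1 / NT) * ((1 / of_nat k) * A a')) = of_real (1 / NT) * (1 / of_nat k) * (\<Sum>a\<in>T. A a)"
      by (simp add: sum_distrib_left mult.assoc)
    also have "\<dots> = of_real (1 / NT) * (1 / of_nat k) * (of_nat k * of_nat n ^ (k - 1) * (\<Sum>s\<in>S. F s))"
      by (simp only: sumA)
    also have "\<dots> = m"
    proof -
      have "real n ^ k = real n * real n ^ (k - 1)" using k by (simp add: power_eq_if)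
      then show ?thesis using k n unfolding m_def NT_def by (simp add: field_simps)
    qed
    finally show ?thesis by simp
  qed
  have step1: "cmod ((1 / of_nat k) * A a - m) powr p \<le> (1 / NT) * real k powr (- p) * (\<Sum>a'\<in>T. cmod (A a - A a') powr p)" for a
  proof -
    have "(1 / of_nat k) * A a - m = (\<Sum>a'\<in>T. of_real (1 / NT) * ((1 / of_nat k) * (A a - A a')))"
    proof -
      have "(\<Sum>a'\<in>T. of_real (1 / NT) * ((1 / of_nat k) * (A a - A a')))
          = (\<Sum>a'\<in>T. of_real (1 / NT) * ((1 / of_nat k) * A a)) - (\<Sum>a'\<in>T. of_real (1 / NT) * ((1 / of_nat k) * A a'))"
        by (simp only: right_diff_distrib sum_subtractf)
      also have "(\<Sum>a'\<in>T. of_real (1 / NT) * ((1 / of_nat k) * A a)) = (1 / of_nat k) * A a"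
        using NT by (simp add: cTc)
      finally show ?thesis using mA by simp
    qed
    then have "cmod ((1 / of_nat k) * A a - m) powr p \<le> (\<Sum>a'\<in>T. (1 / NT) * cmod ((1 / of_nat k) * (A a - A a')) powr p)"
      using jensen_cmod[OF p1 fT neT, of "\<lambda>_. 1 / NT" "\<lambda>a'. (1 / of_nat k) * (A a - A a')"] cT NT by simp
    also have "\<dots> = (\<Sum>a'\<in>T. (1 / NT) * (real k powr (- p) * cmod (A a - A a') powr p))"
    proof (intro sum.cong refl)
      fix a'
      have "cmod ((1 / of_nat k) * (A a - A a')) = (1 / real k) * cmod (A a - A a')"
        by (simp add: norm_mult norm_divide)
      show "(1 / NT) * cmod ((1 / of_nat k) * (A a - A a')) powr p = (1 / NT) * (real k powr (- p) * cmod (A a - A a') powr p)"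
      proof -
        have "((1 / real k) * cmod (A a - A a')) powr p = (1 / real k) powr p * cmod (A a - A a') powr p"
          by (rule powr_mult)
        also have "(1 / real k) powr p = real k powr (- p)"
          using k by (simp add: powr_divide powr_minus_divide)
        finally show ?thesis using \<open>cmod ((1 / of_nat k) * (A a - A a')) = (1 / real k) * cmod (A a - A a')\<close>
          by simp
      qed
    qed
    also have "\<dots> = (1 / NT) * real k powr (- p) * (\<Sum>a'\<in>T. cmod (A a - A a') powr p)"
      by (simp add: sum_distrib_left mult.assoc)
    finally show ?thesis .
  qed
  have L1: "(\<Sum>a\<in>T. cmod ((1 / of_nat k) * A a - m) powr p)
      \<le> (1 / NT) * real k powr (- p) * (\<Sum>z\<in>T \<times> T. cmod (\<Sum>i<k. F (fst z i) - F (snd z i)) powr p)"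
  proof -
    have "(\<Sum>a\<in>T. cmod ((1 / of_nat k) * A a - m) powr p) \<le> (\<Sum>a\<in>T. (1 / NT) * real k powr (- p) * (\<Sum>a'\<in>T. cmod (A a - A a') powr p))"
      by (intro sum_mono step1)
    also have "\<dots> = (1 / NT) * real k powr (- p) * (\<Sum>a\<in>T. \<Sum>a'\<in>T. cmod (A a - A a') powr p)"
      by (simp add: sum_distrib_left)
    also have "(\<Sum>a\<in>T. \<Sum>a'\<in>T. cmod (A a - A a') powr p) = (\<Sum>z\<in>T \<times> T. cmod (\<Sum>i<k. F (fst z i) - F (snd z i)) powr p)"
      by (subst sum.cartesian_product) (simp add: A_def sum_subtractf case_prod_beta)
    finally show ?thesis .
  qed
  \<comment> \<open>step 3: symmetrization and Khintchine\<close>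
  define W where "W = (\<Sum>z\<in>T \<times> T. cmod (\<Sum>i<k. F (fst z i) - F (snd z i)) powr p)"
  have W: "W \<le> K' * (\<Sum>z\<in>T \<times> T. \<Sum>i<k. cmod (F (fst z i) - F (snd z i)) powr p)"
  proof -
    have "(\<Sum>e\<in>Epss k. W) = (\<Sum>e\<in>Epss k. \<Sum>z\<in>T \<times> T. cmod (\<Sum>i<k. of_real (e i) * (F (fst z i) - F (snd z i))) powr p)"
      unfolding W_def T_def
      by (intro sum.cong refl symmetrize[where \<Phi>="\<lambda>x. cmod x powr p"])
    also have "\<dots> = (\<Sum>z\<in>T \<times> T. \<Sum>e\<in>Epss k. cmod (\<Sum>i<k. of_real (e i) * (F (fst z i) - F (snd z i))) powr p)"
      by (rule sum.swap)
    also have "\<dots> \<le> (\<Sum>z\<in>T \<times> T. 2 ^ k * K' * (\<Sum>i<k. cmod (F (fst z i) - F (snd z i)) powr p))"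
      unfolding K'_def by (intro sum_mono khintchine_cplx p)
    also have "\<dots> = 2 ^ k * (K' * (\<Sum>z\<in>T \<times> T. \<Sum>i<k. cmod (F (fst z i) - F (snd z i)) powr p))"
      by (simp add: sum_distrib_left mult.assoc)
    finally have "2 ^ k * W \<le> 2 ^ k * (K' * (\<Sum>z\<in>T \<times> T. \<Sum>i<k. cmod (F (fst z i) - F (snd z i)) powr p))"
      by (simp add: Eps_card)
    then show ?thesis by simp
  qed
  have step4: "(\<Sum>z\<in>T \<times> T. \<Sum>i<k. cmod (F (fst z i) - F (snd z i)) powr p)
      \<le> 2 powr (p - 1) * (2 * real k * NT * real n ^ (k - 1) * PF)"
  proof -
    have "(\<Sum>z\<in>T \<times> T. \<Sum>i<k. cmod (F (fst z i) - F (snd z i)) powr p)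
        \<le> (\<Sum>z\<in>T \<times> T. \<Sum>i<k. 2 powr (p - 1) * (cmod (F (fst z i)) powr p + cmod (F (snd z i)) powr p))"
      by (intro sum_mono two_cmod_diff p1)
    also have "\<dots> = 2 powr (p - 1) * (\<Sum>z\<in>T \<times> T. \<Sum>i<k. (cmod (F (fst z i)) powr p + cmod (F (snd z i)) powr p))"
      by (simp only: sum_distrib_left)
    also have "\<dots> = 2 powr (p - 1) * (\<Sum>i<k. \<Sum>z\<in>T \<times> T. (cmod (F (fst z i)) powr p + cmod (F (snd z i)) powr p))"
      by (subst sum.swap) (rule refl)
    also have "\<dots> = 2 powr (p - 1) * (\<Sum>i<k. (\<Sum>z\<in>T \<times> T. cmod (F (fst z i)) powr p) + (\<Sum>z\<in>T \<times> T. cmod (F (snd z i)) powr p))"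
      by (simp only: sum.distrib)
    also have "(\<Sum>i<k. (\<Sum>z\<in>T \<times> T. cmod (F (fst z i)) powr p) + (\<Sum>z\<in>T \<times> T. cmod (F (snd z i)) powr p))
        = (\<Sum>i<k. if i < k then 2 * NT * (real n ^ (k - 1) * PF) else 0)"
    proof (rule sum.cong[OF refl])
      fix i assume "i \<in> {..<k}"
      then have ik: "i < k" by simp
      show "(\<Sum>z\<in>T \<times> T. cmod (F (fst z i)) powr p) + (\<Sum>z\<in>T \<times> T. cmod (F (snd z i)) powr p)
          = (if i < k then 2 * NT * (real n ^ (k - 1) * PF) else 0)"
      proof -
        note True = ik
        have c: "(\<Sum>a\<in>T. cmod (F (a i)) powr p) = real n ^ (k - 1) * PF"
          unfolding T_def n_def PF_def using tup_coord[OF S(1) True, of "\<lambda>s. cmod (F s) powr p"] by simp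
        have "(\<Sum>z\<in>T \<times> T. cmod (F (fst z i)) powr p) = (\<Sum>a\<in>T. \<Sum>a'\<in>T. cmod (F (a i)) powr p)"
          by (subst sum.cartesian_product) (simp add: case_prod_beta)
        also have "\<dots> = NT * (real n ^ (k - 1) * PF)" using c cT by (simp add: sum_distrib_left[symmetric])
        finally have 1: "(\<Sum>z\<in>T \<times> T. cmod (F (fst z i)) powr p) = NT * (real n ^ (k - 1) * PF)" .
        have "(\<Sum>z\<in>T \<times> T. cmod (F (snd z i)) powr p) = (\<Sum>a\<in>T. \<Sum>a'\<in>T. cmod (F (a' i)) powr p)"
          by (subst sum.cartesian_product) (simp add: case_prod_beta)
        also have "\<dots> = NT * (real n ^ (k - 1) * PF)" using c cT by simp
        finally have 2: "(\<Sum>z\<in>T \<times> T. cmod (F (snd z i)) powr p) = NT * (real n ^ (k - 1) * PF)" .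
        show ?thesis using 1 2 True by simp
      qed
    qed
    also have "(\<Sum>i<k. (if i < k then 2 * NT * (real n ^ (k - 1) * PF) else 0)) = 2 * real k * NT * real n ^ (k - 1) * PF"
      by simp
    finally show ?thesis .
  qed
  have "(\<Sum>a\<in>T. cmod ((1 / of_nat k) * A a - m) powr p)
      \<le> (1 / NT) * real k powr (- p) * (K' * (2 powr (p - 1) * (2 * real k * NT * real n ^ (k - 1) * PF)))"
  proof -
    have K'0: "K' \<ge> 0" by (simp add: K'_def)
    have "W \<le> K' * (2 powr (p - 1) * (2 * real k * NT * real n ^ (k - 1) * PF))"
      using W mult_left_mono[OF step4 K'0] by linarith
    then show ?thesis using L1 NT unfolding W_def
      by (smt (verit) mult_left_mono divide_nonneg_nonneg powr_ge_zero zero_le_mult_iff)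
  qed
  also have "\<dots> = real n ^ k * (2 powr (2 * p + 1) * p powr (p / 2) * real k powr (- p / 2)) * ((1 / real n) * PF)"
  proof -
    have k0: "real k > 0" using k by simp
    have e1: "real k powr (- p) * real k powr (p / 2 - 1) * real k = real k powr (- p / 2)"
    proof -
      have "real k powr (- p + (p / 2 - 1) + 1) = real k powr (- p) * real k powr (p / 2 - 1) * real k powr 1"
        by (simp only: powr_add)
      then have "real k powr (- p) * real k powr (p / 2 - 1) * real k = real k powr (- p + (p / 2 - 1) + 1)"
        using k0 by simp
      also have "- p + (p / 2 - 1) + 1 = - p / 2" by simp
      finally show ?thesis .
    qed
    have e2: "2 powr (p + 1) * 2 powr (p - 1) * 2 = (2::real) powr (2 * p + 1)"
    proof -
      have "(2::real) powr ((p + 1) + (p - 1) + 1) = 2 powr (p + 1) * 2 powr (p - 1) * 2 powr 1"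
        by (simp only: powr_add)
      then have "2 powr (p + 1) * 2 powr (p - 1) * 2 = (2::real) powr ((p + 1) + (p - 1) + 1)"
        by simp
      also have "(p + 1) + (p - 1) + 1 = 2 * p + 1" by simp
      finally show ?thesis .
    qed
    have e3: "real n ^ k = real n * real n ^ (k - 1)" using k by (simp add: power_eq_if)
    have "(1 / NT) * real k powr (- p) * (K' * (2 powr (p - 1) * (2 * real k * NT * real n ^ (k - 1) * PF)))
        = (real k powr (- p) * real k powr (p / 2 - 1) * real k) * (2 powr (p + 1) * 2 powr (p - 1) * 2) * p powr (p / 2) * (real n ^ (k - 1) * PF)"
      using NT unfolding K'_def by (simp add: field_simps)
    also have "\<dots> = real k powr (- p / 2) * 2 powr (2 * p + 1) * p powr (p / 2) * (real n ^ (k - 1) * PF)"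
      by (simp only: e1 e2)
    also have "\<dots> = real n ^ k * (2 powr (2 * p + 1) * p powr (p / 2) * real k powr (- p / 2)) * ((1 / real n) * PF)"
      using n unfolding e3 by (simp add: field_simps)
    finally show ?thesis .
  qed
  finally show ?thesis unfolding T_def A_def m_def PF_def n_def by simp
qed

lemma conv_diff: "conv N (\<lambda>x. u x - v x) w x = conv N u w x - conv N v w x"
  unfolding conv_def by (simp add: sum_subtractf left_diff_distrib right_diff_distrib)

lemma conv_pow0:
  assumes N: "N \<ge> 1" and x: "x \<in> ZN N"
  shows "conv N g (conv_pow N h 0) x = g x"
proof -
  have "(\<Sum>y\<in>ZN N. g y * (if (x - y) mod int N = 0 then of_nat N else 0))
      = (\<Sum>y\<in>ZN N. if y = x then g y * of_nat N else 0)"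
  proof (intro sum.cong refl)
    fix y assume y: "y \<in> ZN N"
    have "(x - y) mod int N = 0 \<longleftrightarrow> y = x"
    proof
      assume "(x - y) mod int N = 0"
      then have "x mod int N = y mod int N" by (simp add: mod_eq_dvd_iff dvd_eq_mod_eq_0)
      then show "y = x" using x y by simp
    qed simp
    then show "g y * (if (x - y) mod int N = 0 then of_nat N else 0) = (if y = x then g y * of_nat N else 0)"
      by simp
  qed
  also have "\<dots> = g x * of_nat N" using x by (simp add: sum.delta')
  finally show ?thesis unfolding conv_def using N by simp
qed

lemma negset_img: "negset N X = (\<lambda>x. (- x) mod int N) ` X"
  by (auto simp: negset_def)

lemma negset_sub: "N \<ge> 1 \<Longrightarrow> negset N X \<subseteq> ZN N"
  by (auto simp: negset_def)

lemma negset_inj: "inj_on (\<lambda>x. (- x) mod int N) (ZN N)"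
proof (rule inj_onI)
  fix x y assume x: "x \<in> ZN N" and y: "y \<in> ZN N" and e: "(- x) mod int N = (- y) mod int N"
  have "(- ((- x) mod int N)) mod int N = (- ((- y) mod int N)) mod int N" using e by simp
  then have "x mod int N = y mod int N" by (simp add: mod_simps)
  then show "x = y" using x y by simp
qed

lemma lam_formula:
  assumes N: "N \<ge> 1" and X: "X \<subseteq> ZN N" "X \<noteq> {}"
  shows "conv N g (lam N X) x = (\<Sum>t\<in>X. \<Sum>t'\<in>X. g ((x + t' - t) mod int N)) / (of_nat (card X))\<^sup>2"
proof -
  have fX: "finite X" using finite_subset[OF X(1) ZN_finite] .
  have cneg: "card (negset N X) = card X"
    unfolding negset_img using inj_on_subset[OF negset_inj X(1)] by (rule card_image)
  have "conv N g (lam N X) x = conv N (conv N g (mu N X)) (mu N (negset N X)) x"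
    unfolding lam_def by (rule conv_assoc[OF N, symmetric])
  also have "\<dots> = (1 / of_nat (card X)) * (\<Sum>u\<in>negset N X. conv N g (mu N X) ((x - u) mod int N))"
    using conv_mu[OF N negset_sub[OF N]] cneg by simp
  also have "(\<Sum>u\<in>negset N X. conv N g (mu N X) ((x - u) mod int N))
      = (\<Sum>t'\<in>X. conv N g (mu N X) ((x - (- t') mod int N) mod int N))"
    unfolding negset_img by (rule sum.reindex[OF inj_on_subset[OF negset_inj X(1)], unfolded comp_def])
  also have "\<dots> = (\<Sum>t'\<in>X. (1 / of_nat (card X)) * (\<Sum>t\<in>X. g ((x + t' - t) mod int N)))"
  proof (intro sum.cong refl)
    fix t' assume "t' \<in> X"
    have "conv N g (mu N X) ((x - (- t') mod int N) mod int N)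
        = (1 / of_nat (card X)) * (\<Sum>t\<in>X. g (((x - (- t') mod int N) mod int N - t) mod int N))"
      by (rule conv_mu[OF N X(1)])
    also have "(\<Sum>t\<in>X. g (((x - (- t') mod int N) mod int N - t) mod int N)) = (\<Sum>t\<in>X. g ((x + t' - t) mod int N))"
      by (intro sum.cong refl) (simp add: mod_simps)
    finally show "conv N g (mu N X) ((x - (- t') mod int N) mod int N) = (1 / of_nat (card X)) * (\<Sum>t\<in>X. g ((x + t' - t) mod int N))" .
  qed
  finally have eq: "conv N g (lam N X) x = (1 / of_nat (card X)) * (\<Sum>t'\<in>X. (1 / of_nat (card X)) * (\<Sum>t\<in>X. g ((x + t' - t) mod int N)))" .
  have e2: "(\<Sum>t'\<in>X. (1 / of_nat (card X)) * (\<Sum>t\<in>X. g ((x + t' - t) mod int N)))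
     = (1 / of_nat (card X)) * (\<Sum>t'\<in>X. \<Sum>t\<in>X. g ((x + t' - t) mod int N))"
    by (rule sum_distrib_left[symmetric])
  have e3: "(\<Sum>t'\<in>X. \<Sum>t\<in>X. g ((x + t' - t) mod int N)) = (\<Sum>t\<in>X. \<Sum>t'\<in>X. g ((x + t' - t) mod int N))"
    by (rule sum.swap)
  show ?thesis unfolding eq e2 e3 by (simp add: power2_eq_square)
qed

definition avg :: "nat \<Rightarrow> (int \<Rightarrow> complex) \<Rightarrow> nat \<Rightarrow> (nat \<Rightarrow> int) \<Rightarrow> int \<Rightarrow> complex" where
  "avg N f k a x = (1 / of_nat k) * (\<Sum>i<k. f ((x - a i) mod int N))"

lemma Psum_nonneg: "Psum N p h \<ge> 0" unfolding Psum_def by (simp add: sum_nonneg)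

lemma Psum_shift:
  assumes N: "N \<ge> 1"
  shows "Psum N p (\<lambda>x. h ((x + c) mod int N)) = Psum N p h"
  unfolding Psum_def using sum_shift[OF N, of "\<lambda>y. cmod (h y) powr p" c] by simp

lemma good_count:
  assumes N: "N \<ge> 1" and S: "S \<subseteq> ZN N" "S \<noteq> {}" and k: "k \<ge> 1" and p: "p \<ge> 2" and \<epsilon>: "\<epsilon> > 0"
    and cond: "2 powr (2 * p + 1) * p powr (p / 2) * real k powr (- p / 2) \<le> \<epsilon> powr p / 2"
  shows "2 * card {a \<in> Tup k S. Psum N p (\<lambda>x. avg N f k a x - conv N f (mu N S) x) \<le> \<epsilon> powr p * Psum N p f} \<ge> card S ^ k"
proof -
  have fS: "finite S" using finite_subset[OF S(1) ZN_finite] .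
  define n where "n = card S"
  have n: "n > 0" using fS S by (simp add: n_def card_gt_0_iff)
  define M0 where "M0 = 2 powr (2 * p + 1) * p powr (p / 2) * real k powr (- p / 2)"
  have M0: "M0 \<ge> 0" by (simp add: M0_def)
  define Pa where "Pa a = Psum N p (\<lambda>x. avg N f k a x - conv N f (mu N S) x)" for a
  define T where "T = Tup k S"
  have fT: "finite T" using fS by (simp add: T_def)
  have cT: "card T = n ^ k" using fS by (simp add: T_def Tup_card n_def)
  have Pa0: "Pa a \<ge> 0" for a by (simp add: Pa_def Psum_nonneg)
  have total: "(\<Sum>a\<in>T. Pa a) \<le> real n ^ k * M0 * Psum N p f"
  proof -
    have px: "(\<Sum>a\<in>T. cmod (avg N f k a x - conv N f (mu N S) x) powr p)
        \<le> real n ^ k * M0 * ((1 / real n) * (\<Sum>s\<in>S. cmod (f ((x - s) mod int N)) powr p))" for x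
    proof -
      have "conv N f (mu N S) x = (1 / of_nat (card S)) * (\<Sum>s\<in>S. f ((x - s) mod int N))"
        by (rule conv_mu[OF N S(1)])
      then show ?thesis
        using sample_moment[OF fS S(2) k p, of "\<lambda>s. f ((x - s) mod int N)"]
        unfolding avg_def T_def M0_def n_def by simp
    qed
    have "(\<Sum>a\<in>T. Pa a) = (\<Sum>x\<in>ZN N. \<Sum>a\<in>T. cmod (avg N f k a x - conv N f (mu N S) x) powr p)"
      unfolding Pa_def Psum_def by (rule sum.swap)
    also have "\<dots> \<le> (\<Sum>x\<in>ZN N. real n ^ k * M0 * ((1 / real n) * (\<Sum>s\<in>S. cmod (f ((x - s) mod int N)) powr p)))"
      by (intro sum_mono px)
    also have "\<dots> = real n ^ k * M0 * ((1 / real n) * (\<Sum>s\<in>S. \<Sum>x\<in>ZN N. cmod (f ((x - s) mod int N)) powr p))"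
      by (simp add: sum_distrib_left sum.swap[of _ "ZN N" S])
    also have "(\<Sum>s\<in>S. \<Sum>x\<in>ZN N. cmod (f ((x - s) mod int N)) powr p) = (\<Sum>s\<in>S. Psum N p f)"
    proof (intro sum.cong refl)
      fix s
      show "(\<Sum>x\<in>ZN N. cmod (f ((x - s) mod int N)) powr p) = Psum N p f"
        using Psum_shift[OF N, of p f "- s"] unfolding Psum_def by simp
    qed
    also have "real n ^ k * M0 * ((1 / real n) * (\<Sum>s\<in>S. Psum N p f)) = real n ^ k * M0 * Psum N p f"
      using n by (simp add: n_def)
    finally show ?thesis .
  qed
  define G where "G = {a \<in> T. Pa a \<le> \<epsilon> powr p * Psum N p f}"
  have GT: "G \<subseteq> T" by (auto simp: G_def)
  show ?thesis
  proof (cases "Psum N p f = 0")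
    case True
    have "Pa a \<le> 0" if "a \<in> T" for a
    proof -
      have "Pa a \<le> (\<Sum>a\<in>T. Pa a)" using that fT Pa0 by (intro member_le_sum) auto
      then show ?thesis using total True by simp
    qed
    then have "G = T" using True by (auto simp: G_def)
    then show ?thesis using cT unfolding G_def Pa_def T_def n_def by simp
  next
    case False
    then have Pf: "Psum N p f > 0" using Psum_nonneg[of N p f] by simp
    have ep: "\<epsilon> powr p > 0" using \<epsilon> by simp
    have "(\<Sum>a\<in>T - G. \<epsilon> powr p * Psum N p f) \<le> (\<Sum>a\<in>T - G. Pa a)"
      by (intro sum_mono) (auto simp: G_def)
    also have "\<dots> \<le> (\<Sum>a\<in>T. Pa a)" using fT Pa0 by (intro sum_mono2) auto
    also have "\<dots> \<le> real n ^ k * M0 * Psum N p f" by (rule total)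
    also have "\<dots> \<le> real n ^ k * (\<epsilon> powr p / 2) * Psum N p f"
      using cond M0 Pf unfolding M0_def by (intro mult_right_mono mult_left_mono) auto
    finally have "real (card (T - G)) * (\<epsilon> powr p * Psum N p f) \<le> (real n ^ k / 2) * (\<epsilon> powr p * Psum N p f)"
      by (simp add: mult_ac)
    then have "real (card (T - G)) \<le> real n ^ k / 2"
      using ep Pf by (simp add: mult_le_cancel_right)
    moreover have "card (T - G) = card T - card G" using GT fT by (simp add: card_Diff_subset finite_subset)
    moreover have "card G \<le> card T" using GT fT by (simp add: card_mono)
    ultimately have "real (card T) - real (card G) \<le> real n ^ k / 2" by (simp add: of_nat_diff)
    then have "real (n ^ k) \<le> real (2 * card G)" using cT by simp
    then have "2 * card G \<ge> n ^ k" by (simp only: of_nat_le_iff)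
    then show ?thesis unfolding G_def Pa_def T_def n_def by simp
  qed
qed

lemma pigeon:
  assumes fA: "finite A" and fB: "finite B" and neB: "B \<noteq> {}" and im: "\<phi> ` A \<subseteq> B"
  shows "\<exists>b\<in>B. card {z \<in> A. \<phi> z = b} * card B \<ge> card A"
proof (rule ccontr)
  assume "\<not> ?thesis"
  then have lt: "\<forall>b\<in>B. card {z \<in> A. \<phi> z = b} * card B < card A" by auto
  have "(\<Sum>b\<in>B. card {z \<in> A. \<phi> z = b}) = card A"
  proof -
    have "(\<Sum>b\<in>B. card {z \<in> A. \<phi> z = b}) = (\<Sum>b\<in>B. \<Sum>z\<in>{z \<in> A. \<phi> z = b}. (1::nat))" by simp
    also have "\<dots> = (\<Sum>z\<in>A. (1::nat))" by (rule sum.group[OF fA fB im])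
    finally show ?thesis by simp
  qed
  then have "card A * card B = (\<Sum>b\<in>B. card {z \<in> A. \<phi> z = b} * card B)"
    by (metis sum_distrib_right)
  also have "\<dots> < (\<Sum>b\<in>B. card A)" using lt fB neB by (intro sum_strict_mono) auto
  also have "\<dots> = card A * card B" by simp
  finally show False by simp
qed

lemma almost_period:
  assumes N: "N \<ge> 1" and S: "S \<subseteq> ZN N" "S \<noteq> {}" and T: "T \<subseteq> ZN N" "T \<noteq> {}"
    and k: "k \<ge> 1" and p: "p \<ge> 2" and \<epsilon>: "\<epsilon> > 0"
    and cond: "2 powr (2 * p + 1) * p powr (p / 2) * real k powr (- p / 2) \<le> \<epsilon> powr p / 2"
    and L: "L \<ge> 1" and ST: "real (card (sumset N S T)) \<le> L * real (card S)"
  shows "\<exists>X. X \<subseteq> T \<and> real (card X) * (2 * L ^ k) \<ge> real (card T) \<and>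
     (\<forall>t\<in>X. \<forall>t'\<in>X. Psum N p (\<lambda>x. conv N f (mu N S) x - conv N f (mu N S) ((x + t' - t) mod int N))
        \<le> (2 * \<epsilon>) powr p * Psum N p f)"
proof -
  define g where "g = conv N f (mu N S)"
  have fS: "finite S" using finite_subset[OF S(1) ZN_finite] .
  have fT: "finite T" using finite_subset[OF T(1) ZN_finite] .
  define n where "n = card S"
  have n: "n > 0" using fS S by (simp add: n_def card_gt_0_iff)
  define G where "G = {a \<in> Tup k S. Psum N p (\<lambda>x. avg N f k a x - g x) \<le> \<epsilon> powr p * Psum N p f}"
  have G2: "2 * card G \<ge> n ^ k" unfolding G_def g_def n_def by (rule good_count[OF N S k p \<epsilon> cond])
  have GT: "G \<subseteq> Tup k S" by (auto simp: G_def)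
  have fG: "finite G" using finite_subset[OF GT Tup_finite[OF fS]] .
  define SS where "SS = sumset N S T"
  have SSsub: "SS \<subseteq> ZN N" using N by (auto simp: SS_def sumset_def)
  have fSS: "finite SS" using finite_subset[OF SSsub ZN_finite] .
  have neSS: "SS \<noteq> {}" using S T by (auto simp: SS_def sumset_def)
  define B where "B = Tup k SS"
  have fB: "finite B" using fSS by (simp add: B_def)
  have neB: "B \<noteq> {}" using neSS by (simp add: B_def Tup_ne)
  have cB: "card B = card SS ^ k" using fSS by (simp add: B_def Tup_card)
  define \<phi> where "\<phi> z = (\<lambda>i. if i < k then (fst z i + snd z) mod int N else undefined)" for z :: "(nat \<Rightarrow> int) \<times> int"
  have im: "\<phi> ` (G \<times> T) \<subseteq> B"
  proof
    fix w assume "w \<in> \<phi> ` (G \<times> T)"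
    then obtain a t where a: "a \<in> G" and t: "t \<in> T" and w: "w = \<phi> (a, t)" by auto
    have "a \<in> Tup k S" using a GT by auto
    then have "\<forall>i<k. a i \<in> S" by (auto simp: Tup_def PiE_def Pi_def)
    then show "w \<in> B" unfolding w B_def Tup_def SS_def \<phi>_def sumset_def
      using t by (auto simp: PiE_def Pi_def extensional_def)
  qed
  obtain b where b: "b \<in> B" and fib: "card {z \<in> G \<times> T. \<phi> z = b} * card B \<ge> card (G \<times> T)"
    using pigeon[OF finite_cartesian_product[OF fG fT] fB neB im] by blast
  define Fb where "Fb = {z \<in> G \<times> T. \<phi> z = b}"
  define X where "X = snd ` Fb"
  have XT: "X \<subseteq> T" by (auto simp: X_def Fb_def)
  have inj: "inj_on snd Fb"
  proof (rule inj_onI)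
    fix z z' assume z: "z \<in> Fb" and z': "z' \<in> Fb" and e: "snd z = snd z'"
    obtain a t where zz: "z = (a, t)" by (cases z)
    obtain a' t' where zz': "z' = (a', t')" by (cases z')
    have tt: "t' = t" using e zz zz' by simp
    have aG: "a \<in> Tup k S" "a' \<in> Tup k S" using z z' zz zz' GT by (auto simp: Fb_def)
    have "a i = a' i" for i
    proof (cases "i < k")
      case True
      have "a i \<in> ZN N" "a' i \<in> ZN N" using aG True S(1) by (auto simp: Tup_def PiE_def Pi_def)
      moreover have "(a i + t) mod int N = (a' i + t) mod int N"
      proof -
        have "\<phi> (a, t) = b" "\<phi> (a', t') = b" using z z' zz zz' by (auto simp: Fb_def)
        then have "\<phi> (a, t) i = \<phi> (a', t) i" using tt by simp
        then show ?thesis using True by (simp add: \<phi>_def)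
      qed
      then have "((a i + t) mod int N - t) mod int N = ((a' i + t) mod int N - t) mod int N" by simp
      then have "a i mod int N = a' i mod int N" by (simp add: mod_simps)
      ultimately show ?thesis by simp
    next
      case False
      then show ?thesis using aG by (auto simp: Tup_def PiE_def extensional_def)
    qed
    then show "z = z'" using zz zz' tt by auto
  qed
  have cX: "card X = card Fb" unfolding X_def by (rule card_image[OF inj])
  have size: "real (card X) * (2 * L ^ k) \<ge> real (card T)"
  proof -
    have "real (card SS) ^ k \<le> (L * real n) ^ k"
      using ST by (intro power_mono) (auto simp: SS_def n_def)
    then have cBr: "real (card B) \<le> L ^ k * real n ^ k" by (simp add: cB power_mult_distrib)
    have "real (card G) * real (card T) \<le> real (card X) * real (card B)"
      using fib cX unfolding Fb_def by (simp add: card_cartesian_product flip: of_nat_mult)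
    also have "\<dots> \<le> real (card X) * (L ^ k * real n ^ k)"
      by (intro mult_left_mono cBr) auto
    finally have A: "real (card G) * real (card T) \<le> real (card X) * (L ^ k * real n ^ k)" .
    have "real n ^ k \<le> 2 * real (card G)" using G2 by (metis of_nat_le_iff of_nat_mult of_nat_numeral of_nat_power)
    then have "real n ^ k * real (card T) \<le> (2 * real (card G)) * real (card T)"
      by (rule mult_right_mono) simp
    also have "\<dots> = 2 * (real (card G) * real (card T))" by simp
    also have "\<dots> \<le> 2 * (real (card X) * (L ^ k * real n ^ k))" using A by simp
    finally have "real n ^ k * real (card T) \<le> real n ^ k * (real (card X) * (2 * L ^ k))"
      by (simp add: mult_ac)
    then show ?thesis using n by (simp add: mult_le_cancel_left)
  qed
  define ab where "ab = avg N f k b"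
  define h where "h t y = ab ((y + t) mod int N) - g y" for t y
  have ht: "Psum N p (h t) \<le> \<epsilon> powr p * Psum N p f" if "t \<in> X" for t
  proof -
    have "t \<in> snd ` Fb" using that by (simp add: X_def)
    then obtain z where z: "t = snd z" "z \<in> Fb" by (rule imageE)
    have "(fst z, t) \<in> Fb" using z by simp
    then obtain a where aF: "(a, t) \<in> Fb" by blast
    then have aG: "a \<in> G" and bb: "\<phi> (a, t) = b" by (auto simp: Fb_def)
    have "avg N f k a x = ab ((x + t) mod int N)" for x
    proof -
      have "((x + t) mod int N - b i) mod int N = (x - a i) mod int N" if "i < k" for i
        using bb that by (auto simp: \<phi>_def mod_simps)
      then show ?thesis unfolding ab_def avg_def by (intro arg_cong[where f="\<lambda>u. _ * u"] sum.cong) auto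
    qed
    then have "h t = (\<lambda>x. avg N f k a x - g x)" by (auto simp: h_def)
    then show ?thesis using aG by (simp add: G_def)
  qed
  have pair: "Psum N p (\<lambda>x. g x - g ((x + t' - t) mod int N)) \<le> (2 * \<epsilon>) powr p * Psum N p f"
    if tX: "t \<in> X" and t'X: "t' \<in> X" for t t'
  proof -
    have dec: "g x - g ((x + t' - t) mod int N) = - h t' x + h t ((x + (t' - t)) mod int N)" for x
    proof -
      have "((x + (t' - t)) mod int N + t) mod int N = (x + t') mod int N" by (simp add: mod_simps)
      then show ?thesis unfolding h_def by (simp add: algebra_simps)
    qed
    have "Psum N p (\<lambda>x. g x - g ((x + t' - t) mod int N))
        \<le> (\<Sum>x\<in>ZN N. 2 powr (p - 1) * (cmod (- h t' x) powr p + cmod (h t ((x + (t' - t)) mod int N)) powr p))"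
      unfolding Psum_def dec using p by (intro sum_mono two_cmod) auto
    also have "\<dots> = 2 powr (p - 1) * (Psum N p (h t') + Psum N p (\<lambda>x. h t ((x + (t' - t)) mod int N)))"
      unfolding Psum_def by (simp only: norm_minus_cancel distrib_left sum.distrib sum_distrib_left)
    also have "Psum N p (\<lambda>x. h t ((x + (t' - t)) mod int N)) = Psum N p (h t)" by (rule Psum_shift[OF N])
    also have "2 powr (p - 1) * (Psum N p (h t') + Psum N p (h t)) \<le> 2 powr (p - 1) * (\<epsilon> powr p * Psum N p f + \<epsilon> powr p * Psum N p f)"
      using ht[OF tX] ht[OF t'X] by (intro mult_left_mono add_mono) auto
    also have "\<dots> = (2 powr (p - 1) * 2) * \<epsilon> powr p * Psum N p f" by (simp add: algebra_simps)
    also have "2 powr (p - 1) * 2 = (2::real) powr p"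
    proof -
      have "(2::real) powr ((p - 1) + 1) = 2 powr (p - 1) * 2 powr 1" by (simp only: powr_add)
      then show ?thesis by simp
    qed
    also have "2 powr p * \<epsilon> powr p = (2 * \<epsilon>) powr p" using \<epsilon> by (simp add: powr_mult)
    finally show ?thesis by (simp add: mult.assoc)
  qed
  show ?thesis
    by (rule exI[of _ X]) (use XT size pair in \<open>auto simp: g_def\<close>)
qed

lemma cond_k:
  assumes p: "p \<ge> 2" and \<epsilon>: "\<epsilon> > 0" and k: "real k \<ge> 64 * p / \<epsilon>\<^sup>2"
  shows "2 powr (2 * p + 1) * p powr (p / 2) * real k powr (- p / 2) \<le> \<epsilon> powr p / 2"
proof -
  have kpos: "real k > 0" using k p \<epsilon> by (smt (verit) divide_pos_pos zero_less_power)
  have A1: "p powr (p / 2) * real k powr (- p / 2) = (p / real k) powr (p / 2)"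
    using kpos p by (simp add: powr_divide powr_minus_divide)
  have A2: "p / real k \<le> \<epsilon>\<^sup>2 / 64"
    using k kpos \<epsilon> by (simp add: field_simps)
  have A3: "(p / real k) powr (p / 2) \<le> (\<epsilon>\<^sup>2 / 64) powr (p / 2)"
    using A2 p kpos by (intro powr_mono2) auto
  have A4: "(\<epsilon>\<^sup>2 / 64) powr (p / 2) = \<epsilon> powr p / 2 powr (3 * p)"
  proof -
    have "(\<epsilon>\<^sup>2 / 64) powr (p / 2) = (\<epsilon>\<^sup>2) powr (p / 2) / 64 powr (p / 2)"
      using \<epsilon> by (simp add: powr_divide)
    also have "(\<epsilon>\<^sup>2) powr (p / 2) = \<epsilon> powr p" using \<epsilon> by (simp add: sq_powr)
    also have "(64::real) powr (p / 2) = 2 powr (3 * p)"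
    proof -
      have "(64::real) = 2 powr 6" by simp
      then have "(64::real) powr (p / 2) = (2 powr 6) powr (p / 2)" by simp
      also have "\<dots> = 2 powr (6 * (p / 2))" by (rule powr_powr)
      also have "6 * (p / 2) = 3 * p" by simp
      finally show ?thesis .
    qed
    finally show ?thesis .
  qed
  have "2 powr (2 * p + 1) * p powr (p / 2) * real k powr (- p / 2) = 2 powr (2 * p + 1) * (p / real k) powr (p / 2)"
    using A1 by (simp add: mult.assoc)
  also have "\<dots> \<le> 2 powr (2 * p + 1) * (\<epsilon> powr p / 2 powr (3 * p))"
    using A3 A4 by (intro mult_left_mono) auto
  also have "\<dots> = \<epsilon> powr p * (2 powr (2 * p + 1) / 2 powr (3 * p))" by simp
  also have "2 powr (2 * p + 1) / 2 powr (3 * p) = (2::real) powr (1 - p)"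
    by (simp add: powr_diff[symmetric] algebra_simps)
  also have "(2::real) powr (1 - p) \<le> 2 powr (- 1)"
    using p by (intro powr_mono) auto
  also have "(2::real) powr (- 1) = 1 / 2" by (simp add: powr_minus)
  finally show ?thesis using \<epsilon> by (simp add: mult_left_mono)
qed

lemma smooth_bound:
  assumes N: "N \<ge> 1" and p: "p \<ge> 2" and X: "X \<subseteq> ZN N" "X \<noteq> {}" and \<delta>: "\<delta> \<ge> 0"
    and pair: "\<forall>t\<in>X. \<forall>t'\<in>X. Psum N p (\<lambda>x. g x - g ((x + t' - t) mod int N)) \<le> \<delta> * Psum N p f"
  shows "Psum N p (\<lambda>x. g x - conv N g (lam N X) x) \<le> \<delta> * Psum N p f"
proof -
  have fX: "finite X" using finite_subset[OF X(1) ZN_finite] .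
  define c where "c = real (card X)"
  have c: "c > 0" using fX X by (simp add: c_def card_gt_0_iff)
  have p1: "p \<ge> 1" using p by simp
  have pt: "cmod (g x - conv N g (lam N X) x) powr p
      \<le> (\<Sum>z\<in>X \<times> X. (1 / c\<^sup>2) * cmod (g x - g ((x + snd z - fst z) mod int N)) powr p)" for x
  proof -
    have "g x - conv N g (lam N X) x = (\<Sum>z\<in>X \<times> X. of_real (1 / c\<^sup>2) * (g x - g ((x + snd z - fst z) mod int N)))"
    proof -
      have "(\<Sum>z\<in>X \<times> X. of_real (1 / c\<^sup>2) * (g x - g ((x + snd z - fst z) mod int N)))
          = (\<Sum>z\<in>X \<times> X. of_real (1 / c\<^sup>2) * g x) - (\<Sum>z\<in>X \<times> X. of_real (1 / c\<^sup>2) * g ((x + snd z - fst z) mod int N))"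
        by (simp only: right_diff_distrib sum_subtractf)
      also have "(\<Sum>z\<in>X \<times> X. of_real (1 / c\<^sup>2) * g x) = g x"
        using c by (simp add: card_cartesian_product c_def power2_eq_square)
      also have "(\<Sum>z\<in>X \<times> X. of_real (1 / c\<^sup>2) * g ((x + snd z - fst z) mod int N))
          = of_real (1 / c\<^sup>2) * (\<Sum>t\<in>X. \<Sum>t'\<in>X. g ((x + t' - t) mod int N))"
        by (simp add: sum_distrib_left sum.cartesian_product case_prod_beta)
      also have "\<dots> = conv N g (lam N X) x"
        using lam_formula[OF N X, of g x] by (simp add: c_def divide_inverse mult.commute)
      finally show ?thesis by simp
    qed
    also have "cmod \<dots> powr p \<le> (\<Sum>z\<in>X \<times> X. (1 / c\<^sup>2) * cmod (g x - g ((x + snd z - fst z) mod int N)) powr p)"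
      by (rule jensen_cmod[OF p1]) (use fX X c in \<open>auto simp: card_cartesian_product c_def power2_eq_square\<close>)
    finally show ?thesis .
  qed
  have "Psum N p (\<lambda>x. g x - conv N g (lam N X) x)
      \<le> (\<Sum>x\<in>ZN N. \<Sum>z\<in>X \<times> X. (1 / c\<^sup>2) * cmod (g x - g ((x + snd z - fst z) mod int N)) powr p)"
    unfolding Psum_def by (intro sum_mono pt)
  also have "\<dots> = (\<Sum>z\<in>X \<times> X. (1 / c\<^sup>2) * Psum N p (\<lambda>x. g x - g ((x + snd z - fst z) mod int N)))"
    unfolding Psum_def by (subst sum.swap) (simp add: sum_distrib_left)
  also have "\<dots> \<le> (\<Sum>z\<in>X \<times> X. (1 / c\<^sup>2) * (\<delta> * Psum N p f))"
    using pair by (intro sum_mono mult_left_mono) auto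
  also have "\<dots> = \<delta> * Psum N p f"
    using c by (simp add: card_cartesian_product c_def power2_eq_square)
  finally show ?thesis .
qed

lemma telescope_bound:
  assumes N: "N \<ge> 1" and p: "p \<ge> 2" and l: "l \<ge> 1" and X: "X \<subseteq> ZN N" "X \<noteq> {}"
    and base: "Psum N p (\<lambda>x. g x - conv N g (lam N X) x) \<le> B"
  shows "Psum N p (\<lambda>x. g x - conv N g (conv_pow N (lam N X) l) x) \<le> real l powr p * B"
proof -
  have p1: "p \<ge> 1" using p by simp
  define Lm where "Lm = lam N X"
  have pdl: "pd N Lm"
  proof -
    have "negset N X \<noteq> {}" using X by (auto simp: negset_def)
    then show ?thesis unfolding Lm_def lam_def
      using pd_conv[OF N pd_mu[OF X] pd_mu[OF negset_sub[OF N]]] by simp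
  qed
  define G where "G j = conv N g (conv_pow N Lm j)" for j
  define H where "H j = conv N (\<lambda>x. g x - conv N g Lm x) (conv_pow N Lm j)" for j
  have HG: "H j x = G j x - G (Suc j) x" for j x
  proof -
    have "G (Suc j) x = conv N g (conv N (conv_pow N Lm j) Lm) x" by (simp add: G_def)
    also have "conv N (conv_pow N Lm j) Lm = conv N Lm (conv_pow N Lm j)"
      by (rule ext) (rule conv_comm[OF N])
    also have "conv N g (conv N Lm (conv_pow N Lm j)) x = conv N (conv N g Lm) (conv_pow N Lm j) x"
      by (rule conv_assoc[OF N, symmetric])
    finally show ?thesis unfolding H_def G_def using conv_diff[of N g "conv N g Lm"] by simp
  qed
  have HP: "Psum N p (H j) \<le> B" for j
    using order_trans[OF Psum_conv_pd[OF N p1 pd_conv_pow[OF N pdl]] base] unfolding H_def Lm_def by simp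
  have sumH: "g x - G l x = (\<Sum>j<l. H j x)" if x: "x \<in> ZN N" for x
  proof -
    have "(\<Sum>j<l. H j x) = G 0 x - G l x"
      unfolding HG by (rule sum_lessThan_telescope')
    also have "G 0 x = g x" unfolding G_def by (rule conv_pow0[OF N x])
    finally show ?thesis by simp
  qed
  have "Psum N p (\<lambda>x. g x - G l x) = (\<Sum>x\<in>ZN N. cmod (\<Sum>j<l. H j x) powr p)"
    unfolding Psum_def by (intro sum.cong refl) (simp add: sumH)
  also have "\<dots> \<le> (\<Sum>x\<in>ZN N. real l powr (p - 1) * (\<Sum>j<l. cmod (H j x) powr p))"
    using powmean_cmod[OF p1, of "{..<l}"] by (intro sum_mono) simp
  also have "\<dots> = real l powr (p - 1) * (\<Sum>j<l. Psum N p (H j))"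
    unfolding Psum_def by (simp add: sum_distrib_left sum.swap[of _ "ZN N" "{..<l}"])
  also have "\<dots> \<le> real l powr (p - 1) * (\<Sum>j<l. B)"
    using HP by (intro mult_left_mono sum_mono) auto
  also have "\<dots> = real l powr (p - 1) * real l * B" by simp
  also have "real l powr (p - 1) * real l = real l powr p"
  proof -
    have "real l powr ((p - 1) + 1) = real l powr (p - 1) * real l powr 1" by (simp only: powr_add)
    then show ?thesis using l by simp
  qed
  finally show ?thesis unfolding G_def Lm_def .
qed

theorem lemma5p6:
  shows "\<exists>C::real. C > 0 \<and>
    (\<forall>(N::nat) (p::real) (l::nat) (\<theta>::real) (f::int \<Rightarrow> complex) (L::real) (S::int set) (T::int set).
       N \<ge> 1 \<longrightarrow> p \<ge> 2 \<longrightarrow> l \<ge> 1 \<longrightarrow> 0 < \<theta> \<longrightarrow> \<theta> < 1 \<longrightarrow> L \<ge> 1 \<longrightarrow>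
       S \<subseteq> ZN N \<longrightarrow> T \<subseteq> ZN N \<longrightarrow> S \<noteq> {} \<longrightarrow> T \<noteq> {} \<longrightarrow>
       real (card (sumset N S T)) \<le> L * real (card S) \<longrightarrow>
       (\<exists>X. X \<subseteq> T \<and>
          real (card X) \<ge> (2 * L) powr (- C * p * real l ^ 2 / \<theta> ^ 2) * real (card T) \<and>
          Lp_norm N p (\<lambda>x. conv N f (mu N S) x - conv N (conv N f (mu N S)) (conv_pow N (lam N X) l) x)
            \<le> \<theta> * Lp_norm N p f))"
proof (rule exI[of _ 257], intro conjI allI impI)
  show "(257::real) > 0" by simp
next
  fix N :: nat and p :: real and l :: nat and \<theta> :: real and f :: "int \<Rightarrow> complex" and L :: real
    and S T :: "int set"
  assume N: "N \<ge> 1" and p: "p \<ge> 2" and l: "l \<ge> 1" and \<theta>0: "0 < \<theta>" and \<theta>1: "\<theta> < 1" and L: "L \<ge> 1"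
    and S: "S \<subseteq> ZN N" and T: "T \<subseteq> ZN N" and Sne: "S \<noteq> {}" and Tne: "T \<noteq> {}"
    and ST: "real (card (sumset N S T)) \<le> L * real (card S)"
  define Q where "Q = p * real l ^ 2 / \<theta> ^ 2"
  have l1: "real l ^ 2 \<ge> 1" using l by simp
  have th2: "\<theta> ^ 2 > 0" "\<theta> ^ 2 < 1" using \<theta>0 \<theta>1 by (auto simp: power_less_one_iff)
  have "p * real l ^ 2 \<ge> p * 1" using p by (intro mult_left_mono l1) auto
  then have "p * real l ^ 2 \<ge> 2" using p by linarith
  moreover have "p * real l ^ 2 \<le> Q"
  proof -
    have a0: "p * real l ^ 2 \<ge> 0" using p by simp
    have "p * real l ^ 2 * \<theta> ^ 2 \<le> p * real l ^ 2"
      using a0 th2 by (intro mult_right_le_one_le) auto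
    then show ?thesis unfolding Q_def using th2 by (simp add: le_divide_eq)
  qed
  ultimately have Q2: "Q \<ge> 2" by linarith
  define \<epsilon> where "\<epsilon> = \<theta> / (2 * real l)"
  have \<epsilon>: "\<epsilon> > 0" using \<theta>0 l by (simp add: \<epsilon>_def)
  define k where "k = nat \<lceil>256 * Q\<rceil>"
  have kr: "real k = real_of_int \<lceil>256 * Q\<rceil>"
  proof -
    have "\<lceil>256 * Q\<rceil> \<ge> 0" using Q2 by simp
    then show ?thesis unfolding k_def by simp
  qed
  have kge: "real k \<ge> 256 * Q" unfolding kr by (rule le_of_int_ceiling)
  have "real k \<le> 256 * Q + 1" unfolding kr by (rule of_int_ceiling_le_add_one)
  then have kle: "real k \<le> 257 * Q" using Q2 by linarith
  have "real k \<ge> 1" using kge Q2 by linarith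
  then have k1: "k \<ge> 1" by simp
  have "64 * p / \<epsilon>\<^sup>2 = 256 * Q"
    using \<theta>0 l by (simp add: \<epsilon>_def Q_def power_divide field_simps)
  then have cond: "2 powr (2 * p + 1) * p powr (p / 2) * real k powr (- p / 2) \<le> \<epsilon> powr p / 2"
    using cond_k[OF p \<epsilon>, of k] kge by simp
  obtain X where XT: "X \<subseteq> T" and size: "real (card X) * (2 * L ^ k) \<ge> real (card T)"
    and pair: "\<forall>t\<in>X. \<forall>t'\<in>X. Psum N p (\<lambda>x. conv N f (mu N S) x - conv N f (mu N S) ((x + t' - t) mod int N))
        \<le> (2 * \<epsilon>) powr p * Psum N p f"
    using almost_period[OF N S Sne T Tne k1 p \<epsilon> cond L ST] by blast
  have fT: "finite T" using finite_subset[OF T ZN_finite] .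
  have cT: "real (card T) > 0" using fT Tne by (simp add: card_gt_0_iff)
  have Xne: "X \<noteq> {}" using size cT by auto
  have XZ: "X \<subseteq> ZN N" using XT T by auto
  define g where "g = conv N f (mu N S)"
  have sm: "Psum N p (\<lambda>x. g x - conv N g (lam N X) x) \<le> (2 * \<epsilon>) powr p * Psum N p f"
    using smooth_bound[OF N p XZ Xne _ pair[folded g_def]] by simp
  have tb: "Psum N p (\<lambda>x. g x - conv N g (conv_pow N (lam N X) l) x) \<le> real l powr p * ((2 * \<epsilon>) powr p * Psum N p f)"
    by (rule telescope_bound[OF N p l XZ Xne sm])
  have "real l powr p * (2 * \<epsilon>) powr p = \<theta> powr p"
  proof -
    have "real l powr p * (2 * \<epsilon>) powr p = (real l * (2 * \<epsilon>)) powr p"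
      using \<epsilon> by (simp add: powr_mult)
    also have "real l * (2 * \<epsilon>) = \<theta>" using l by (simp add: \<epsilon>_def)
    finally show ?thesis .
  qed
  then have tb2: "Psum N p (\<lambda>x. g x - conv N g (conv_pow N (lam N X) l) x) \<le> \<theta> powr p * Psum N p f"
    using tb by (simp add: mult.assoc[symmetric])
  have Lp: "Lp_norm N p (\<lambda>x. conv N f (mu N S) x - conv N (conv N f (mu N S)) (conv_pow N (lam N X) l) x)
            \<le> \<theta> * Lp_norm N p f"
    using Lp_le[OF \<theta>0 _ tb2[unfolded g_def]] p by simp
  have sz: "(2 * L) powr (- 257 * p * real l ^ 2 / \<theta> ^ 2) * real (card T) \<le> real (card X)"
  proof -
    have L2: "2 * L \<ge> 1" using L by simp
    have "- 257 * p * real l ^ 2 / \<theta> ^ 2 = - (257 * Q)" by (simp add: Q_def)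
    then have "(2 * L) powr (- 257 * p * real l ^ 2 / \<theta> ^ 2) \<le> (2 * L) powr (- real k)"
      using kle L2 by (intro powr_mono) auto
    also have "(2 * L) powr (- real k) = 1 / (2 * L) ^ k"
      using L by (simp add: powr_minus_divide powr_realpow)
    also have "\<dots> \<le> 1 / (2 * L ^ k)"
    proof -
      have "(2::real) ^ k \<ge> 2" using k1 by (metis power_one_right power_increasing numeral_le_iff one_le_numeral semiring_norm(69))
      then have "2 * L ^ k \<le> 2 ^ k * L ^ k" using L by (intro mult_right_mono) auto
      then show ?thesis using L by (intro divide_left_mono) (auto simp: power_mult_distrib)
    qed
    finally have "(2 * L) powr (- 257 * p * real l ^ 2 / \<theta> ^ 2) * real (card T) \<le> 1 / (2 * L ^ k) * real (card T)"
      by (intro mult_right_mono) auto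
    also have "\<dots> \<le> real (card X)" using size L by (simp add: field_simps)
    finally show ?thesis .
  qed
  show "\<exists>X. X \<subseteq> T \<and>
          real (card X) \<ge> (2 * L) powr (- 257 * p * real l ^ 2 / \<theta> ^ 2) * real (card T) \<and>
          Lp_norm N p (\<lambda>x. conv N f (mu N S) x - conv N (conv N f (mu N S)) (conv_pow N (lam N X) l) x)
            \<le> \<theta> * Lp_norm N p f"
    using XT sz Lp by blast
qed

end
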